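(* For every bipartite quantum channel $\mathcal{N}\in\mathrm{Ch}(A'B',AB)$, \[ S^{\downarrow}_{\infty}(R_AA|R_BB)_{\Phi^{\mathcal{N}}}-\log|A'|\ \le\ S_{\infty}[A|B]_{\mathcal{N}}\ \le\ S_{\infty}(R_AA|R_BB)_{\Phi^{\mathcal{N}}}-\log|A'|. \]
   Context: All systems are finite-dimensional; $|X|$ denotes dimension; $\log$ is base 2. $\mathrm{St}(X)$ is the set of density operators, $\mathrm{Ch}(X',X)$ the set of quantum channels. Maximally entangled state: $\Phi_{RX}:=\frac1d\sum_{i,j=0}^{d-1}|ii\rangle\langle jj|$ with $R\simeq X$, $d=|X|$. The Choi state of $\mathcal{N}\in\mathrm{Ch}(A'B',AB)$ is $\Phi^{\mathcal{N}}_{R_AAR_BB}:=(\mathrm{id}_{R_AR_B}\otimes\mathcal{N})(\Phi_{R_AA'}\otimes\Phi_{R_BB'})$, $R_A\simeq A'$, $R_B\simeq B'$. $\mathcal{R}^{\mathbb 1}_{A'\to A}(X):=\operatorname{tr}(X)\mathbb 1_A$. $D_\infty(\rho\|\sigma):=\log\inf\{\lambda\ge0:\rho\le\lambda\sigma\}$; for a channel $\mathcal{M}$ and CP map $\mathcal{M}'$ with the same input $X'$, $D_\infty[\mathcal{M}\|\mathcal{M}']:=\sup_{\rho\in\mathrm{St}(RX')}D_\infty((\mathrm{id}_R\otimes\mathcal{M})(\rho)\|(\mathrm{id}_R\otimes\mathcal{M}')(\rho))$. Conditional channel min-entropy: $S_\infty[A|B]_{\mathcal{N}}:=-\inf_{\mathcal{Q}\in\mathrm{Ch}(B',B)}D_\infty[\mathcal{N}\|\mathcal{R}^{\mathbb1}_{A'\to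 A}\otimes\mathcal{Q}_{B'\to B}]$. For a bipartite state $\rho_{XY}$: $S_\infty(X|Y)_\rho:=-\inf_{\sigma\in\mathrm{St}(Y)}D_\infty(\rho_{XY}\|\mathbb1_X\otimes\sigma_Y)$ and $S^\downarrow_\infty(X|Y)_\rho:=-D_\infty(\rho_{XY}\|\mathbb1_X\otimes\rho_Y)$. *)

theory Defs
  imports "HOL-Analysis.Analysis" "Jordan_Normal_Form.Matrix"
begin

text \<open>A system of dimension d is C^d; operators on it are complex d x d
 matrices (Jordan_Normal_Form type complex mat). For a composite system XY with
 dimensions dX, dY the basis index of |x>|y> is x * dY + y (first factor most significant).
 Logarithms are base 2. Values of divergences and entropies live in the extended reals,
 with the usual conventions log 0 = -infinity and inf of the empty set = +infinity.\<close>

definition mtrace :: "complex mat \<Rightarrow> complex" where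
  "mtrace A = (\<Sum>i<dim_row A. A $$ (i,i))"

definition psd :: "nat \<Rightarrow> complex mat \<Rightarrow> bool" where
  "psd d A \<longleftrightarrow> A \<in> carrier_mat d d \<and>
     (\<forall>v :: nat \<Rightarrow> complex. (\<Sum>i<d. \<Sum>j<d. cnj (v i) * A $$ (i,j) * v j) \<in> \<real> \<and>
         0 \<le> Re (\<Sum>i<d. \<Sum>j<d. cnj (v i) * A $$ (i,j) * v j))"

definition loewner_le :: "nat \<Rightarrow> complex mat \<Rightarrow> complex mat \<Rightarrow> bool" where
  "loewner_le d A B \<longleftrightarrow> A \<in> carrier_mat d d \<and> B \<in> carrier_mat d d \<and> psd d (B - A)"

definition density_ops :: "nat \<Rightarrow> complex mat set" where
  "density_ops d = {\<rho>. psd d \<rho> \<and> mtrace \<rho> = 1}"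

definition tensor_mat :: "complex mat \<Rightarrow> complex mat \<Rightarrow> complex mat" where
  "tensor_mat A B = mat (dim_row A * dim_row B) (dim_col A * dim_col B)
     (\<lambda>(r,c). A $$ (r div dim_row B, c div dim_col B) * B $$ (r mod dim_row B, c mod dim_col B))"

definition block_of :: "nat \<Rightarrow> complex mat \<Rightarrow> nat \<Rightarrow> nat \<Rightarrow> complex mat" where
  "block_of d X a b = mat d d (\<lambda>(i,j). X $$ (a * d + i, b * d + j))"

definition mat_unit :: "nat \<Rightarrow> nat \<Rightarrow> nat \<Rightarrow> complex mat" where
  "mat_unit d i j = mat d d (\<lambda>(r,c). if r = i \<and> c = j then 1 else 0)"

definition ptrace1 :: "nat \<Rightarrow> nat \<Rightarrow> complex mat \<Rightarrow> complex mat" where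
  "ptrace1 dX dY \<rho> = mat dY dY (\<lambda>(i,j). \<Sum>a<dX. \<rho> $$ (a * dY + i, a * dY + j))"

text \<open>Linear maps from operators on C^din to operators on C^dout are modelled as
 functions complex mat => complex mat, considered on carrier_mat din din.\<close>

definition id_tensor_map ::
  "nat \<Rightarrow> nat \<Rightarrow> nat \<Rightarrow> (complex mat \<Rightarrow> complex mat) \<Rightarrow> complex mat \<Rightarrow> complex mat" where
  "id_tensor_map k din dout M X = mat (k * dout) (k * dout)
     (\<lambda>(r,c). M (block_of din X (r div dout) (c div dout)) $$ (r mod dout, c mod dout))"

text \<open>Tensor product M1 \<otimes> M2 of linear maps (M1 : C^d1 -> C^e1, M2 : C^d2 -> C^e2),
 written entrywise,
 defined by linear extension of X1 \<otimes> X2 \<mapsto> M1 X1 \<otimes> M2 X2.\<close>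
definition tensor_map ::
  "nat \<Rightarrow> nat \<Rightarrow> nat \<Rightarrow> nat \<Rightarrow> (complex mat \<Rightarrow> complex mat) \<Rightarrow> (complex mat \<Rightarrow> complex mat)
     \<Rightarrow> complex mat \<Rightarrow> complex mat" where
  "tensor_map d1 d2 e1 e2 M1 M2 X = mat (e1 * e2) (e1 * e2) (\<lambda>(r,c).
     \<Sum>i<d1. \<Sum>j<d1. tensor_mat (M1 (mat_unit d1 i j)) (M2 (block_of d2 X i j)) $$ (r,c))"

definition linear_map_on :: "nat \<Rightarrow> nat \<Rightarrow> (complex mat \<Rightarrow> complex mat) \<Rightarrow> bool" where
  "linear_map_on din dout M \<longleftrightarrow>
     (\<forall>X \<in> carrier_mat din din. M X \<in> carrier_mat dout dout) \<and>
     (\<forall>X \<in> carrier_mat din din. \<forall>Y \<in> carrier_mat din din. M (X + Y) = M X + M Y) \<and>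
     (\<forall>c. \<forall>X \<in> carrier_mat din din. M (c \<cdot>\<^sub>m X) = c \<cdot>\<^sub>m M X)"

definition completely_positive :: "nat \<Rightarrow> nat \<Rightarrow> (complex mat \<Rightarrow> complex mat) \<Rightarrow> bool" where
  "completely_positive din dout M \<longleftrightarrow> linear_map_on din dout M \<and>
     (\<forall>k>0. \<forall>X. psd (k * din) X \<longrightarrow> psd (k * dout) (id_tensor_map k din dout M X))"

definition channels :: "nat \<Rightarrow> nat \<Rightarrow> (complex mat \<Rightarrow> complex mat) set" where
  "channels din dout = {M. completely_positive din dout M \<and>
     (\<forall>X \<in> carrier_mat din din. mtrace (M X) = mtrace X)}"

definition repl_id :: "nat \<Rightarrow> complex mat \<Rightarrow> complex mat" where
  "repl_id dA X = mtrace X \<cdot>\<^sub>m 1\<^sub>m dA"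

definition max_ent :: "nat \<Rightarrow> complex mat" where
  "max_ent d = mat (d * d) (d * d)
     (\<lambda>(r,c). if r div d = r mod d \<and> c div d = c mod d then 1 / of_nat d else 0)"

definition elog2 :: "real \<Rightarrow> ereal" where
  "elog2 x = (if x = 0 then -\<infinity> else ereal (log 2 x))"

definition Dmax :: "nat \<Rightarrow> complex mat \<Rightarrow> complex mat \<Rightarrow> ereal" where
  "Dmax d \<rho> \<sigma> =
     (let L = {t. 0 \<le> (t::real) \<and> loewner_le d \<rho> (complex_of_real t \<cdot>\<^sub>m \<sigma>)}
      in if L = {} then \<infinity> else elog2 (Inf L))"

text \<open>Channel divergence D_inf[M||M'] for maps from C^din to C^dout; the supremum ranges
 over all reference systems R (of any dimension k >= 1) and all states on R X'.\<close>
definition Dmax_ch ::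
  "nat \<Rightarrow> nat \<Rightarrow> (complex mat \<Rightarrow> complex mat) \<Rightarrow> (complex mat \<Rightarrow> complex mat) \<Rightarrow> ereal" where
  "Dmax_ch din dout M M' =
     (SUP p \<in> {(k, \<rho>). 0 < k \<and> \<rho> \<in> density_ops (k * din)}.
        Dmax (fst p * dout) (id_tensor_map (fst p) din dout M (snd p))
                            (id_tensor_map (fst p) din dout M' (snd p)))"

definition chan_cond_min_entropy ::
  "nat \<Rightarrow> nat \<Rightarrow> nat \<Rightarrow> nat \<Rightarrow> (complex mat \<Rightarrow> complex mat) \<Rightarrow> ereal" where
  "chan_cond_min_entropy dA' dB' dA dB N =
     - (INF Q \<in> channels dB' dB.
          Dmax_ch (dA' * dB') (dA * dB) N (tensor_map dA' dB' dA dB (repl_id dA) Q))"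

definition cond_min_entropy :: "nat \<Rightarrow> nat \<Rightarrow> complex mat \<Rightarrow> ereal" where
  "cond_min_entropy dX dY \<rho> =
     - (INF \<sigma> \<in> density_ops dY. Dmax (dX * dY) \<rho> (tensor_mat (1\<^sub>m dX) \<sigma>))"

definition cond_min_entropy_down :: "nat \<Rightarrow> nat \<Rightarrow> complex mat \<Rightarrow> ereal" where
  "cond_min_entropy_down dX dY \<rho> =
     - Dmax (dX * dY) \<rho> (tensor_mat (1\<^sub>m dX) (ptrace1 dX dY \<rho>))"

text \<open>Choi state of N in Ch(A'B',AB) on R_A A R_B B (|R_A| = |A'|, |R_B| = |B'|):
 (id_{R_A R_B} \<otimes> N)(Phi_{R_A A'} \<otimes> Phi_{R_B B'}). Up to the ordering of factors,
 Phi_{R_A A'} \<otimes> Phi_{R_B B'} is the maximally entangled state between R_A R_B and A'B';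
 we compute it on R_A R_B A B and then reorder the factors to R_A A R_B B.\<close>
definition choi_reindex :: "nat \<Rightarrow> nat \<Rightarrow> nat \<Rightarrow> nat \<Rightarrow> nat \<Rightarrow> nat" where
  "choi_reindex dA' dB' dA dB r =
     (let b = r mod dB; rb = (r div dB) mod dB'; a = (r div (dB * dB')) mod dA;
          ra = r div (dB * dB' * dA)
      in ((ra * dB' + rb) * dA + a) * dB + b)"

definition choi_state :: "nat \<Rightarrow> nat \<Rightarrow> nat \<Rightarrow> nat \<Rightarrow> (complex mat \<Rightarrow> complex mat) \<Rightarrow> complex mat" where
  "choi_state dA' dB' dA dB N =
     (let C = id_tensor_map (dA' * dB') (dA' * dB') (dA * dB) N (max_ent (dA' * dB'));
          D = dA' * dA * dB' * dB
      in mat D D (\<lambda>(r,c). C $$ (choi_reindex dA' dB' dA dB r, choi_reindex dA' dB' dA dB c)))"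

end

theory Submission
  imports Defs
begin

lemma sum_split_mult:
  fixes f :: "nat \<Rightarrow> 'a::comm_monoid_add"
  shows "(\<Sum>r<k*d. f r) = (\<Sum>a<k. \<Sum>p<d. f (a*d+p))"
proof -
  have "(\<Sum>r<k*d. f r) = (\<Sum>a<k. sum f {a*d..<a*d+d})"
    by (rule sum.nat_group[symmetric])
  also have "\<dots> = (\<Sum>a<k. \<Sum>p<d. f (a*d+p))"
  proof (rule sum.cong[OF refl])
    fix a
    have "sum f {a*d..<a*d+d} = sum f {0+a*d..<d+a*d}" by (simp add: add.commute)
    also have "\<dots> = (\<Sum>p=0..<d. f (p + a*d))" by (rule sum.shift_bounds_nat_ivl)
    finally show "sum f {a*d..<a*d+d} = (\<Sum>p<d. f (a*d+p))"
      by (simp add: atLeast0LessThan add.commute)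
  qed
  finally show ?thesis .
qed

lemma idx_lt: "a < k \<Longrightarrow> p < (d::nat) \<Longrightarrow> a*d+p < k*d"
proof -
  assume "a < k" "p < d"
  then have "a*d + p < a*d + d" by simp
  also have "\<dots> = (a+1)*d" by simp
  also have "\<dots> \<le> k*d" using \<open>a<k\<close> by (intro mult_right_mono) auto
  finally show ?thesis .
qed

lemma idx_div[simp]: "p < (d::nat) \<Longrightarrow> (a*d+p) div d = a"
  by simp
lemma idx_mod[simp]: "p < (d::nat) \<Longrightarrow> (a*d+p) mod d = p"
  by simp

definition qf :: "nat \<Rightarrow> (nat \<Rightarrow> nat \<Rightarrow> complex) \<Rightarrow> (nat \<Rightarrow> complex) \<Rightarrow> complex" where
  "qf n A v = (\<Sum>i<n. \<Sum>j<n. cnj (v i) * A i j * v j)"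

definition psdf :: "nat \<Rightarrow> (nat \<Rightarrow> nat \<Rightarrow> complex) \<Rightarrow> bool" where
  "psdf n A \<longleftrightarrow> (\<forall>v. 0 \<le> qf n A v)"

lemma nonneg_iff: "(0::complex) \<le> z \<longleftrightarrow> z \<in> \<real> \<and> 0 \<le> Re z"
  by (auto simp: less_eq_complex_def complex_is_Real_iff)

lemma psd_iff: "psd d M \<longleftrightarrow> M \<in> carrier_mat d d \<and> psdf d (\<lambda>i j. M $$ (i,j))"
  unfolding psd_def psdf_def qf_def nonneg_iff by auto

lemma if0_mult_l[simp]: "(if P then (x::complex) else 0) * y = (if P then x * y else 0)" by simp
lemma if0_mult_r[simp]: "y * (if P then (x::complex) else 0) = (if P then y * x else 0)" by simp
lemma if0_cnj[simp]: "cnj (if P then (x::complex) else 0) = (if P then cnj x else 0)" by simp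

lemma qf_one:
  assumes "i < m"
  shows "qf m A (\<lambda>k. if k = i then x else 0) = cnj x * A i i * x"
  using assms by (simp add: qf_def sum.delta')

lemma qf_two:
  assumes "i < m" "j < m" "i \<noteq> j"
  shows "qf m A (\<lambda>k. if k = i then x else if k = j then y else 0)
     = cnj x * A i i * x + cnj x * A i j * y + cnj y * A j i * x + cnj y * A j j * y"
proof -
  have e: "(\<lambda>k. if k = i then x else if k = j then y else 0)
      = (\<lambda>k. (if k = i then x else 0) + (if k = j then y else 0))"
    using assms by auto
  show ?thesis unfolding e qf_def
    using assms
    by (simp add: distrib_left distrib_right sum.distrib sum.delta')
qed

lemma psdf_diag:
  assumes "psdf m A" "i < m"
  shows "0 \<le> A i i"
proof -
  have "0 \<le> qf m A (\<lambda>k. if k = i then 1 else 0)" using assms unfolding psdf_def by blast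
  then show ?thesis using qf_one[OF assms(2), of A 1] by simp
qed

lemma psdf_herm:
  assumes "psdf m A" "i < m" "j < m"
  shows "A j i = cnj (A i j)"
proof (cases "i = j")
  case True
  then show ?thesis using psdf_diag[OF assms(1,2)]
    by (simp add: less_eq_complex_def complex_eq_iff)
next
  case False
  have d1: "0 \<le> A i i" "0 \<le> A j j" using psdf_diag assms by auto
  have "0 \<le> qf m A (\<lambda>k. if k = i then 1 else if k = j then 1 else 0)"
    using assms unfolding psdf_def by blast
  then have h1: "0 \<le> A i i + A i j + A j i + A j j"
    using qf_two[OF assms(2,3) False, of A 1 1] by simp
  have "0 \<le> qf m A (\<lambda>k. if k = i then 1 else if k = j then \<i> else 0)"
    using assms unfolding psdf_def by blast
  then have "0 \<le> cnj 1 * A i i * 1 + cnj 1 * A i j * \<i> + cnj \<i> * A j i * 1 + cnj \<i> * A j j * \<i>"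
    using qf_two[OF assms(2,3) False, of A 1 \<i>] by simp
  moreover have "cnj 1 * A i i * 1 + cnj 1 * A i j * \<i> + cnj \<i> * A j i * 1 + cnj \<i> * A j j * \<i>
     = A i i + \<i> * A i j - \<i> * A j i + A j j" by (simp add: algebra_simps)
  ultimately have h2: "0 \<le> A i i + \<i> * A i j - \<i> * A j i + A j j" by metis
  show ?thesis using h1 h2 d1
    by (auto simp: less_eq_complex_def complex_eq_iff)
qed

lemma psdf_zero_col:
  assumes "psdf m A" "i < m" "n < m" "A n n = 0"
  shows "A i n = 0"
proof (rule ccontr)
  assume ne: "A i n \<noteq> 0"
  then have "i \<noteq> n" using assms by auto
  define c where "c = (Re (A i i) + 1) / (2 * (cmod (A i n))^2)"
  define y where "y = - complex_of_real c * cnj (A i n)"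
  have "0 \<le> qf m A (\<lambda>k. if k = i then 1 else if k = n then y else 0)"
    using assms unfolding psdf_def by blast
  then have h: "0 \<le> A i i + A i n * y + cnj y * A n i"
    using qf_two[OF assms(2,3) \<open>i\<noteq>n\<close>, of A 1 y] assms(4) by simp
  have hn: "A n i = cnj (A i n)" using psdf_herm[OF assms(1,2,3)] .
  have "A i n * y + cnj y * A n i = - 2 * complex_of_real c * (cmod (A i n))^2"
    unfolding y_def hn
    by (simp add: complex_norm_square[symmetric] algebra_simps)
  also have "\<dots> = - complex_of_real (Re (A i i) + 1)"
    using ne unfolding c_def by (simp add: field_simps)
  finally have eq: "A i n * y + cnj y * A n i = - complex_of_real (Re (A i i) + 1)" .
  have "0 \<le> A i i + (- complex_of_real (Re (A i i) + 1))" using h unfolding add.assoc eq .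
  then show False by (simp add: less_eq_complex_def)
qed

lemma qf_Suc:
  "qf (Suc n) A v = qf n A v + (\<Sum>i<n. cnj (v i) * A i n) * v n
     + cnj (v n) * (\<Sum>j<n. A n j * v j) + cnj (v n) * A n n * v n"
  unfolding qf_def by (simp add: sum.distrib sum_distrib_left sum_distrib_right algebra_simps)

lemma qf_cong: "(\<And>i. i < n \<Longrightarrow> v i = w i) \<Longrightarrow> qf n A v = qf n A w"
  unfolding qf_def by (intro sum.cong refl) auto

lemma psdf_restrict: "psdf (Suc n) A \<Longrightarrow> psdf n A"
  unfolding psdf_def
proof
  fix v :: "nat \<Rightarrow> complex" assume h: "\<forall>v. 0 \<le> qf (Suc n) A v"
  define w where "w = (\<lambda>k. if k < n then v k else 0)"
  have "qf (Suc n) A w = qf n A w" unfolding qf_Suc by (simp add: w_def)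
  also have "\<dots> = qf n A v" by (rule qf_cong) (simp add: w_def)
  finally show "0 \<le> qf n A v" using h by metis
qed

lemma psdf_decomp: "psdf n A \<Longrightarrow> \<exists>W. \<forall>i<n. \<forall>j<n. A i j = (\<Sum>k<n. W k i * cnj (W k j))"
proof (induction n arbitrary: A)
  case 0
  then show ?case by simp
next
  case (Suc n)
  have herm: "\<And>i j. i < Suc n \<Longrightarrow> j < Suc n \<Longrightarrow> A j i = cnj (A i j)"
    using psdf_herm[OF Suc.prems] by blast
  have dn: "0 \<le> A n n" using psdf_diag[OF Suc.prems] by simp
  define \<alpha> where "\<alpha> = Re (A n n)"
  have Ann: "A n n = complex_of_real \<alpha>" using dn unfolding \<alpha>_def
    by (simp add: less_eq_complex_def complex_eq_iff)
  have \<alpha>0: "\<alpha> \<ge> 0" using dn unfolding \<alpha>_def by (simp add: less_eq_complex_def)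
  show ?case
  proof (cases "\<alpha> = 0")
    case True
    have z: "\<And>i. i < Suc n \<Longrightarrow> A i n = 0"
      using psdf_zero_col[OF Suc.prems] Ann True by simp
    have z2: "A n j = 0" if "j < Suc n" for j
    proof -
      have "A n j = cnj (A j n)" using herm[OF that lessI] .
      then show ?thesis using z[OF that] by simp
    qed
    obtain W' where W': "\<forall>i<n. \<forall>j<n. A i j = (\<Sum>k<n. W' k i * cnj (W' k j))"
      using Suc.IH[OF psdf_restrict[OF Suc.prems]] by blast
    define W where "W = (\<lambda>k i. if k < n \<and> i < n then W' k i else 0)"
    show ?thesis
    proof (intro exI allI impI)
      fix i j assume ij: "i < Suc n" "j < Suc n"
      show "A i j = (\<Sum>k<Suc n. W k i * cnj (W k j))"
      proof (cases "i < n \<and> j < n")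
        case True
        have "W n i = 0" by (simp add: W_def)
        then have "(\<Sum>k<Suc n. W k i * cnj (W k j)) = (\<Sum>k<n. W k i * cnj (W k j))"
          by simp
        also have "\<dots> = (\<Sum>k<n. W' k i * cnj (W' k j))"
          by (rule sum.cong) (simp_all add: W_def True)
        also have "\<dots> = A i j" using W' True by simp
        finally show ?thesis by simp
      next
        case False
        then have "i = n \<or> j = n" using ij by auto
        then have p: "W k i * cnj (W k j) = 0" for k unfolding W_def by auto
        have "(\<Sum>k<Suc n. W k i * cnj (W k j)) = 0" by (simp only: p sum.neutral_const)
        moreover have "A i j = 0" using z z2 ij \<open>i = n \<or> j = n\<close> by auto
        ultimately show ?thesis by simp
      qed
    qed
  next
    case False
    then have \<alpha>p: "\<alpha> > 0" using \<alpha>0 by simp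
    define A' where "A' = (\<lambda>i j. A i j - A i n * A n j / complex_of_real \<alpha>)"
    have qfA': "qf n A' v = qf n A v - (\<Sum>i<n. cnj (v i) * A i n) * (\<Sum>j<n. A n j * v j) / complex_of_real \<alpha>" for v
    proof -
      have "qf n A' v = (\<Sum>i<n. \<Sum>j<n. cnj (v i) * A i j * v j - (cnj (v i) * A i n) * (A n j * v j) / complex_of_real \<alpha>)"
        unfolding qf_def A'_def by (simp add: algebra_simps)
      also have "\<dots> = (\<Sum>i<n. \<Sum>j<n. cnj (v i) * A i j * v j) - (\<Sum>i<n. \<Sum>j<n. (cnj (v i) * A i n) * (A n j * v j) / complex_of_real \<alpha>)"
        by (simp only: sum_subtractf)
      also have "(\<Sum>i<n. \<Sum>j<n. cnj (v i) * A i j * v j) = qf n A v" by (simp add: qf_def)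
      also have "(\<Sum>i<n. \<Sum>j<n. (cnj (v i) * A i n) * (A n j * v j) / complex_of_real \<alpha>)
          = (\<Sum>i<n. cnj (v i) * A i n) * (\<Sum>j<n. A n j * v j) / complex_of_real \<alpha>"
        by (simp only: sum_product sum_divide_distrib)
      finally show ?thesis .
    qed
    have "psdf n A'"
      unfolding psdf_def
    proof
      fix v
      define s where "s = (\<Sum>j<n. A n j * v j)"
      define t where "t = - s / complex_of_real \<alpha>"
      define s' where "s' = (\<Sum>i<n. cnj (v i) * A i n)"
      define v' where "v' = v(n := t)"
      have q1: "qf n A v' = qf n A v" by (rule qf_cong) (simp add: v'_def)
      have q2: "(\<Sum>i<n. cnj (v' i) * A i n) = s'" unfolding s'_def v'_def by simp
      have q3: "(\<Sum>j<n. A n j * v' j) = s" unfolding s_def v'_def by simp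
      have pos: "0 \<le> qf (Suc n) A v'" using Suc.prems unfolding psdf_def by blast
      have "qf (Suc n) A v' = qf n A v + s' * t + cnj t * s + cnj t * complex_of_real \<alpha> * t"
        unfolding qf_Suc q1 q2 q3 Ann[symmetric] by (simp add: v'_def)
      also have "\<dots> = qf n A' v"
      proof -
        have at: "complex_of_real \<alpha> * t = - s" unfolding t_def using \<alpha>p by simp
        have "cnj t * s + cnj t * complex_of_real \<alpha> * t = 0"
          by (simp add: mult.assoc at)
        moreover have "s' * t = - (s' * s / complex_of_real \<alpha>)" by (simp add: t_def)
        ultimately show ?thesis
          unfolding qfA' s_def[symmetric] s'_def[symmetric]
          by (simp add: algebra_simps)
      qed
      finally show "0 \<le> qf n A' v" using pos by simp
    qed
    then obtain W' where W': "\<forall>i<n. \<forall>j<n. A' i j = (\<Sum>k<n. W' k i * cnj (W' k j))"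
      using Suc.IH[of A'] by blast
    define r where "r = complex_of_real (sqrt \<alpha>)"
    define W where "W = (\<lambda>k i. if k < n then (if i < n then W' k i else 0)
                               else A i n / r)"
    have sqr: "sqrt \<alpha> * sqrt \<alpha> = \<alpha>" using \<alpha>0 by simp
    have sq: "r * r = complex_of_real \<alpha>" unfolding r_def by (simp only: of_real_mult[symmetric] sqr)
    have cr: "cnj r = r" unfolding r_def by simp
    show ?thesis
    proof (intro exI allI impI)
      fix i j assume ij: "i < Suc n" "j < Suc n"
      have hj: "cnj (A j n) = A n j" using herm[OF ij(2) lessI] by simp
      have "W n i * cnj (W n j) = (A i n / r) * (cnj (A j n) / cnj r)" by (simp add: W_def)
      also have "\<dots> = A i n * A n j / (r * r)" unfolding hj cr by simp
      finally have last: "W n i * cnj (W n j) = A i n * A n j / complex_of_real \<alpha>"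
        unfolding sq .
      show "A i j = (\<Sum>k<Suc n. W k i * cnj (W k j))"
      proof (cases "i < n \<and> j < n")
        case True
        have "(\<Sum>k<n. W k i * cnj (W k j)) = (\<Sum>k<n. W' k i * cnj (W' k j))"
          by (rule sum.cong) (simp_all add: W_def True)
        also have "\<dots> = A' i j" using W' True by simp
        finally have "(\<Sum>k<n. W k i * cnj (W k j)) = A' i j" .
        then show ?thesis using last by (simp add: A'_def)
      next
        case False
        then have ijn: "i = n \<or> j = n" using ij by auto
        then have p: "W k i * cnj (W k j) = 0" if "k < n" for k
          unfolding W_def using that by auto
        have "(\<Sum>k<n. W k i * cnj (W k j)) = 0" by (rule sum.neutral) (simp add: p)
        moreover have "A i n * A n j / complex_of_real \<alpha> = A i j"
        proof (cases "i = n")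
          case True
          then show ?thesis using Ann \<alpha>p by simp
        next
          case False
          then have "j = n" using ijn by simp
          then show ?thesis using Ann \<alpha>p by simp
        qed
        ultimately show ?thesis using last by simp
      qed
    qed
  qed
qed

lemma sum_rot3:
  "(\<Sum>x\<in>A. \<Sum>y\<in>B. \<Sum>k\<in>C. F x y k) = (\<Sum>k\<in>C. \<Sum>x\<in>A. \<Sum>y\<in>B. F x y k)"
proof -
  have "(\<Sum>x\<in>A. \<Sum>y\<in>B. \<Sum>k\<in>C. F x y k) = (\<Sum>x\<in>A. \<Sum>k\<in>C. \<Sum>y\<in>B. F x y k)"
    by (rule sum.cong[OF refl], rule sum.swap)
  also have "\<dots> = (\<Sum>k\<in>C. \<Sum>x\<in>A. \<Sum>y\<in>B. F x y k)" by (rule sum.swap)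
  finally show ?thesis .
qed

lemma psdf_trace_prod:
  assumes "psdf n A" "psdf n B"
  shows "0 \<le> (\<Sum>x<n. \<Sum>y<n. A x y * B x y)"
proof -
  obtain W where W: "\<forall>i<n. \<forall>j<n. A i j = (\<Sum>k<n. W k i * cnj (W k j))"
    using psdf_decomp[OF assms(1)] by blast
  have "(\<Sum>x<n. \<Sum>y<n. A x y * B x y) = (\<Sum>x<n. \<Sum>y<n. \<Sum>k<n. W k x * cnj (W k y) * B x y)"
    using W by (simp add: sum_distrib_right)
  also have "\<dots> = (\<Sum>k<n. \<Sum>x<n. \<Sum>y<n. W k x * cnj (W k y) * B x y)"
    by (rule sum_rot3)
  also have "\<dots> = (\<Sum>k<n. qf n B (\<lambda>x. cnj (W k x)))"
    unfolding qf_def by (simp add: mult_ac)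
  also have "0 \<le> \<dots>" using assms(2) unfolding psdf_def by (intro sum_nonneg) auto
  finally show ?thesis .
qed

lemma qf_split: "qf (k*d) A v = (\<Sum>a<k. \<Sum>p<d. \<Sum>b<k. \<Sum>q<d.
    cnj (v (a*d+p)) * A (a*d+p) (b*d+q) * v (b*d+q))"
  unfolding qf_def by (simp only: sum_split_mult)

lemma qf_cong_mat: "(\<And>r c. r < n \<Longrightarrow> c < n \<Longrightarrow> A r c = B r c) \<Longrightarrow> qf n A v = qf n B v"
  unfolding qf_def by (intro sum.cong refl) auto

lemma qf_sum: "qf n (\<lambda>r c. \<Sum>m\<in>M. T m r c) v = (\<Sum>m\<in>M. qf n (T m) v)"
proof -
  have "qf n (\<lambda>r c. \<Sum>m\<in>M. T m r c) v = (\<Sum>r<n. \<Sum>c<n. \<Sum>m\<in>M. cnj (v r) * T m r c * v c)"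
    unfolding qf_def by (simp add: sum_distrib_left sum_distrib_right)
  also have "\<dots> = (\<Sum>m\<in>M. \<Sum>r<n. \<Sum>c<n. cnj (v r) * T m r c * v c)" by (rule sum_rot3)
  finally show ?thesis unfolding qf_def .
qed

lemma sum_swap_at1:
  "(\<Sum>a\<in>A. \<Sum>x\<in>X. \<Sum>y\<in>Y. F a x y) = (\<Sum>a\<in>A. \<Sum>y\<in>Y. \<Sum>x\<in>X. F a x y)"
  by (rule sum.cong[OF refl], rule sum.swap)

lemma reorder6:
  "(\<Sum>a\<in>A. \<Sum>p\<in>P. \<Sum>b\<in>A. \<Sum>q\<in>P. \<Sum>i\<in>I. \<Sum>j\<in>I. F a b i j p q)
 = (\<Sum>a\<in>A. \<Sum>i\<in>I. \<Sum>b\<in>A. \<Sum>j\<in>I. \<Sum>p\<in>P. \<Sum>q\<in>P. F a b i j p q)"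
proof -
  have s22: "(\<Sum>p\<in>P. \<Sum>q\<in>P. \<Sum>i\<in>I. \<Sum>j\<in>I. G i j p q)
      = (\<Sum>i\<in>I. \<Sum>j\<in>I. \<Sum>p\<in>P. \<Sum>q\<in>P. G i j p q)" for G
  proof -
    have "(\<Sum>p\<in>P. \<Sum>q\<in>P. \<Sum>i\<in>I. \<Sum>j\<in>I. G i j p q) = (\<Sum>p\<in>P. \<Sum>i\<in>I. \<Sum>q\<in>P. \<Sum>j\<in>I. G i j p q)"
      by (rule sum_swap_at1)
    also have "\<dots> = (\<Sum>i\<in>I. \<Sum>p\<in>P. \<Sum>q\<in>P. \<Sum>j\<in>I. G i j p q)" by (rule sum.swap)
    also have "\<dots> = (\<Sum>i\<in>I. \<Sum>j\<in>I. \<Sum>p\<in>P. \<Sum>q\<in>P. G i j p q)"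
      by (rule sum.cong[OF refl], rule sum_rot3)
    finally show ?thesis .
  qed
  have "(\<Sum>a\<in>A. \<Sum>p\<in>P. \<Sum>b\<in>A. \<Sum>q\<in>P. \<Sum>i\<in>I. \<Sum>j\<in>I. F a b i j p q)
      = (\<Sum>a\<in>A. \<Sum>b\<in>A. \<Sum>p\<in>P. \<Sum>q\<in>P. \<Sum>i\<in>I. \<Sum>j\<in>I. F a b i j p q)"
    by (rule sum_swap_at1)
  also have "\<dots> = (\<Sum>a\<in>A. \<Sum>b\<in>A. \<Sum>i\<in>I. \<Sum>j\<in>I. \<Sum>p\<in>P. \<Sum>q\<in>P. F a b i j p q)"
    by (rule sum.cong[OF refl], rule sum.cong[OF refl], rule s22)
  also have "\<dots> = (\<Sum>a\<in>A. \<Sum>i\<in>I. \<Sum>b\<in>A. \<Sum>j\<in>I. \<Sum>p\<in>P. \<Sum>q\<in>P. F a b i j p q)"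
    by (rule sum_swap_at1)
  finally show ?thesis .
qed

lemma choi_core:
  assumes R: "psdf (k*din) R" and J: "psdf (din*dout) J"
  shows "psdf (k*dout) (\<lambda>r c. \<Sum>i<din. \<Sum>j<din. R ((r div dout)*din+i) ((c div dout)*din+j)
            * J (i*dout + r mod dout) (j*dout + c mod dout))"
  unfolding psdf_def
proof
  fix v :: "nat \<Rightarrow> complex"
  obtain Z where Z: "\<forall>x<din*dout. \<forall>y<din*dout. J x y = (\<Sum>m<din*dout. Z m x * cnj (Z m y))"
    using psdf_decomp[OF J] by blast
  define Tm where "Tm m r c = (\<Sum>i<din. \<Sum>j<din. R ((r div dout)*din+i) ((c div dout)*din+j)
            * (Z m (i*dout + r mod dout) * cnj (Z m (j*dout + c mod dout))))" for m r c
  have T_eq: "(\<Sum>i<din. \<Sum>j<din. R ((r div dout)*din+i) ((c div dout)*din+j)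
            * J (i*dout + r mod dout) (j*dout + c mod dout)) = (\<Sum>m<din*dout. Tm m r c)"
    if rc: "r < k*dout" "c < k*dout" for r c
  proof -
    have dpos: "0 < dout" using rc by (cases "dout = 0") auto
    have "(\<Sum>i<din. \<Sum>j<din. R ((r div dout)*din+i) ((c div dout)*din+j)
            * J (i*dout + r mod dout) (j*dout + c mod dout))
        = (\<Sum>i<din. \<Sum>j<din. \<Sum>m<din*dout. R ((r div dout)*din+i) ((c div dout)*din+j)
            * (Z m (i*dout + r mod dout) * cnj (Z m (j*dout + c mod dout))))"
    proof (intro sum.cong refl)
      fix i j assume "i \<in> {..<din}" "j \<in> {..<din}"
      then have "i*dout + r mod dout < din*dout" "j*dout + c mod dout < din*dout"
        using dpos by (auto intro!: idx_lt)
      then show "R ((r div dout)*din+i) ((c div dout)*din+j) * J (i*dout + r mod dout) (j*dout + c mod dout)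
         = (\<Sum>m<din*dout. R ((r div dout)*din+i) ((c div dout)*din+j)
            * (Z m (i*dout + r mod dout) * cnj (Z m (j*dout + c mod dout))))"
        using Z by (simp add: sum_distrib_left)
    qed
    also have "\<dots> = (\<Sum>m<din*dout. Tm m r c)" unfolding Tm_def by (rule sum_rot3)
    finally show ?thesis .
  qed
  define y where "y m s = (\<Sum>q<dout. cnj (Z m ((s mod din)*dout + q)) * v ((s div din)*dout + q))" for m s
  have each: "qf (k*dout) (Tm m) v = qf (k*din) R (y m)" for m
  proof -
    define F where "F a b i j p q = Z m (i*dout+p) * cnj (v (a*dout+p)) * R (a*din+i) (b*din+j)
        * cnj (Z m (j*dout+q)) * v (b*dout+q)" for a b i j p q
    have "qf (k*dout) (Tm m) v = (\<Sum>a<k. \<Sum>p<dout. \<Sum>b<k. \<Sum>q<dout. \<Sum>i<din. \<Sum>j<din. F a b i j p q)"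
      unfolding qf_split Tm_def F_def
      by (simp add: sum_distrib_left sum_distrib_right mult_ac)
    also have "\<dots> = (\<Sum>a<k. \<Sum>i<din. \<Sum>b<k. \<Sum>j<din. \<Sum>p<dout. \<Sum>q<dout. F a b i j p q)"
      by (rule reorder6)
    also have "\<dots> = qf (k*din) R (y m)"
      unfolding qf_split y_def F_def
      by (simp add: sum_distrib_left sum_distrib_right mult_ac)
    finally show ?thesis .
  qed
  have "qf (k*dout) (\<lambda>r c. \<Sum>i<din. \<Sum>j<din. R ((r div dout)*din+i) ((c div dout)*din+j)
            * J (i*dout + r mod dout) (j*dout + c mod dout)) v
      = qf (k*dout) (\<lambda>r c. \<Sum>m<din*dout. Tm m r c) v"
    by (rule qf_cong_mat) (rule T_eq)
  also have "\<dots> = (\<Sum>m<din*dout. qf (k*din) R (y m))" unfolding qf_sum each ..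
  also have "0 \<le> \<dots>" using R unfolding psdf_def by (intro sum_nonneg) auto
  finally show "0 \<le> qf (k*dout) (\<lambda>r c. \<Sum>i<din. \<Sum>j<din. R ((r div dout)*din+i) ((c div dout)*din+j)
            * J (i*dout + r mod dout) (j*dout + c mod dout)) v" .
qed

lemma psdf_cong: "(\<And>i j. i < n \<Longrightarrow> j < n \<Longrightarrow> A i j = B i j) \<Longrightarrow> psdf n A \<longleftrightarrow> psdf n B"
proof -
  assume h: "\<And>i j. i < n \<Longrightarrow> j < n \<Longrightarrow> A i j = B i j"
  have "qf n A v = qf n B v" for v unfolding qf_def by (intro sum.cong refl) (auto simp: h)
  then show ?thesis unfolding psdf_def by simp
qed

lemma psdf_reindex:
  assumes f: "bij_betw f {..<n} {..<n}" and A: "psdf n A"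
  shows "psdf n (\<lambda>i j. A (f i) (f j))"
  unfolding psdf_def
proof
  fix v :: "nat \<Rightarrow> complex"
  define g where "g = the_inv_into {..<n} f"
  define w where "w x = v (g x)" for x
  have gf: "g (f i) = i" if "i < n" for i
    unfolding g_def using f that by (simp add: bij_betw_def the_inv_into_f_f)
  have "qf n A w = (\<Sum>x<n. \<Sum>y<n. cnj (w x) * A x y * w y)" by (simp add: qf_def)
  also have "\<dots> = (\<Sum>i<n. \<Sum>y<n. cnj (w (f i)) * A (f i) y * w y)"
    by (rule sum.reindex_bij_betw[OF f, symmetric])
  also have "\<dots> = (\<Sum>i<n. \<Sum>j<n. cnj (w (f i)) * A (f i) (f j) * w (f j))"
    by (rule sum.cong[OF refl], rule sum.reindex_bij_betw[OF f, symmetric])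
  also have "\<dots> = qf n (\<lambda>i j. A (f i) (f j)) v"
    unfolding qf_def w_def by (intro sum.cong refl) (simp add: gf)
  finally show "0 \<le> qf n (\<lambda>i j. A (f i) (f j)) v" using A unfolding psdf_def by metis
qed

lemma psdf_reindex_iff:
  assumes f: "bij_betw f {..<n} {..<n}"
  shows "psdf n (\<lambda>i j. A (f i) (f j)) \<longleftrightarrow> psdf n A"
proof
  assume h: "psdf n (\<lambda>i j. A (f i) (f j))"
  define g where "g = the_inv_into {..<n} f"
  have g: "bij_betw g {..<n} {..<n}" unfolding g_def by (rule bij_betw_the_inv_into[OF f])
  have fg: "f (g i) = i" if "i < n" for i
    unfolding g_def using f that by (simp add: bij_betw_def f_the_inv_into_f)
  have "psdf n (\<lambda>i j. A (f (g i)) (f (g j)))" using psdf_reindex[OF g h] by simp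
  then show "psdf n A" by (subst (asm) psdf_cong[where B = A]) (auto simp: fg)
next
  assume "psdf n A" then show "psdf n (\<lambda>i j. A (f i) (f j))" by (rule psdf_reindex[OF f])
qed

lemma psd_reindex_iff:
  assumes f: "bij_betw f {..<n} {..<n}" and M: "M \<in> carrier_mat n n"
  shows "psd n (mat n n (\<lambda>(r,c). M $$ (f r, f c))) \<longleftrightarrow> psd n M"
proof -
  have fl: "f i < n" if "i < n" for i using f that by (auto simp: bij_betw_def)
  have "psdf n (\<lambda>i j. mat n n (\<lambda>(r,c). M $$ (f r, f c)) $$ (i,j)) \<longleftrightarrow> psdf n (\<lambda>i j. M $$ (f i, f j))"
    by (rule psdf_cong) simp
  also have "\<dots> \<longleftrightarrow> psdf n (\<lambda>i j. M $$ (i, j))" by (rule psdf_reindex_iff[OF f])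
  finally show ?thesis unfolding psd_iff using M by auto
qed

lemma Dmax_reindex:
  assumes f: "bij_betw f {..<n} {..<n}" and A: "A \<in> carrier_mat n n" and B: "B \<in> carrier_mat n n"
  shows "Dmax n (mat n n (\<lambda>(r,c). A $$ (f r, f c))) (mat n n (\<lambda>(r,c). B $$ (f r, f c))) = Dmax n A B"
proof -
  have fl: "f i < n" if "i < n" for i using f that by (auto simp: bij_betw_def)
  have "loewner_le n (mat n n (\<lambda>(r,c). A $$ (f r, f c))) (complex_of_real t \<cdot>\<^sub>m mat n n (\<lambda>(r,c). B $$ (f r, f c)))
     \<longleftrightarrow> loewner_le n A (complex_of_real t \<cdot>\<^sub>m B)" for t
  proof -
    have e: "complex_of_real t \<cdot>\<^sub>m mat n n (\<lambda>(r,c). B $$ (f r, f c)) - mat n n (\<lambda>(r,c). A $$ (f r, f c))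
        = mat n n (\<lambda>(r,c). (complex_of_real t \<cdot>\<^sub>m B - A) $$ (f r, f c))"
      using A B fl by (intro eq_matI) auto
    have c: "complex_of_real t \<cdot>\<^sub>m B - A \<in> carrier_mat n n" using A B by (auto intro: minus_carrier_mat)
    show ?thesis unfolding loewner_le_def e psd_reindex_iff[OF f c] using A B by auto
  qed
  then show ?thesis unfolding Dmax_def by simp
qed

lemma cr_props:
  fixes x1 x2 x3 x4 r :: nat
  assumes r: "r < x1*x3*x2*x4"
  shows "choi_reindex x1 x2 x3 x4 r < x1*x2*x3*x4" "choi_reindex x1 x3 x2 x4 (choi_reindex x1 x2 x3 x4 r) = r"
proof -
  have pos: "0 < x4" "0 < x2" "0 < x3" "0 < x1" using r by (auto intro!: Nat.gr0I)
  define b where "b = r mod x4"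
  define rb where "rb = (r div x4) mod x2"
  define a where "a = (r div (x4*x2)) mod x3"
  define ra where "ra = r div (x4*x2*x3)"
  have lt: "b < x4" "rb < x2" "a < x3" "ra < x1"
    unfolding b_def rb_def a_def ra_def using pos r
    by (auto simp: less_mult_imp_div_less mult_ac div_less_iff_less_mult)
  have rdec: "r = ((ra*x3 + a)*x2 + rb)*x4 + b"
  proof -
    have "r = (r div x4)*x4 + b" unfolding b_def by simp
    moreover have "r div x4 = (r div (x4*x2))*x2 + rb" unfolding rb_def by (simp add: div_mult2_eq)
    moreover have "r div (x4*x2) = ra*x3 + a" unfolding ra_def a_def by (simp add: div_mult2_eq)
    ultimately show ?thesis by simp
  qed
  have eq: "choi_reindex x1 x2 x3 x4 r = ((ra*x2 + rb)*x3 + a)*x4 + b"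
    unfolding choi_reindex_def Let_def b_def rb_def a_def ra_def by (simp add: mult_ac)
  show "choi_reindex x1 x2 x3 x4 r < x1*x2*x3*x4" unfolding eq using lt
    by (intro idx_lt) (auto intro!: idx_lt)
  define X where "X = ((ra*x2 + rb)*x3 + a)*x4 + b"
  have X1: "X mod x4 = b" "X div x4 = (ra*x2 + rb)*x3 + a" unfolding X_def using lt by auto
  have X2: "(X div x4) mod x3 = a" "(X div x4) div x3 = ra*x2 + rb" unfolding X1 using lt by auto
  have X3: "X div (x4*x3) = ra*x2 + rb" using X2 by (simp add: div_mult2_eq)
  have X4a: "X div (x4*x3) mod x2 = rb" unfolding X3 using lt by simp
  have "X div (x4*x3*x2) = X div (x4*x3) div x2" by (simp add: div_mult2_eq)
  then have X4b: "X div (x4*x3*x2) = ra" unfolding X3 using lt by simp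
  note X4 = X4a X4b
  have "choi_reindex x1 x3 x2 x4 X = ((ra*x3 + a)*x2 + rb)*x4 + b"
    unfolding choi_reindex_def Let_def using X1 X2 X4 by (simp add: mult_ac)
  then show "choi_reindex x1 x3 x2 x4 (choi_reindex x1 x2 x3 x4 r) = r" unfolding eq X_def[symmetric]
    using rdec by simp
qed

lemma cr_bij:
  fixes x1 x2 x3 x4 :: nat
  shows "bij_betw (choi_reindex x1 x2 x3 x4) {..<x1*x3*x2*x4} {..<x1*x2*x3*x4}"
proof (rule bij_betw_byWitness[where f' = "choi_reindex x1 x3 x2 x4"])
  show "\<forall>a\<in>{..<x1*x3*x2*x4}. choi_reindex x1 x3 x2 x4 (choi_reindex x1 x2 x3 x4 a) = a"
    using cr_props(2) by auto
  show "\<forall>a'\<in>{..<x1*x2*x3*x4}. choi_reindex x1 x2 x3 x4 (choi_reindex x1 x3 x2 x4 a') = a'"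
    using cr_props(2)[of _ x1 x2 x3 x4] by auto
  show "choi_reindex x1 x2 x3 x4 ` {..<x1*x3*x2*x4} \<subseteq> {..<x1*x2*x3*x4}" using cr_props(1) by auto
  show "choi_reindex x1 x3 x2 x4 ` {..<x1*x2*x3*x4} \<subseteq> {..<x1*x3*x2*x4}" using cr_props(1)[of _ x1 x2 x3 x4] by auto
qed

definition choi :: "nat \<Rightarrow> nat \<Rightarrow> (complex mat \<Rightarrow> complex mat) \<Rightarrow> complex mat" where
  "choi din dout L = id_tensor_map din din dout L (max_ent din)"

lemma mat_unit_carrier[simp]: "mat_unit d i j \<in> carrier_mat d d"
  unfolding mat_unit_def by simp

lemma block_carrier[simp]: "block_of d X a b \<in> carrier_mat d d"
  unfolding block_of_def by simp

lemma block_index: "i < d \<Longrightarrow> j < d \<Longrightarrow> block_of d X a b $$ (i,j) = X $$ (a*d+i, b*d+j)"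
  unfolding block_of_def by simp

lemma max_ent_carrier[simp]: "max_ent d \<in> carrier_mat (d*d) (d*d)"
  unfolding max_ent_def by simp

lemma block_max_ent:
  assumes "i < d" "j < d"
  shows "block_of d (max_ent d) i j = (1 / of_nat d) \<cdot>\<^sub>m mat_unit d i j"
proof (rule eq_matI)
  fix r c assume rc: "r < dim_row ((1 / of_nat d) \<cdot>\<^sub>m mat_unit d i j)" "c < dim_col ((1 / of_nat d) \<cdot>\<^sub>m mat_unit d i j)"
  then have rc': "r < d" "c < d" by (auto simp: mat_unit_def)
  have l: "i*d+r < d*d" "j*d+c < d*d" using assms rc' by (auto intro: idx_lt)
  show "block_of d (max_ent d) i j $$ (r, c) = ((1 / of_nat d) \<cdot>\<^sub>m mat_unit d i j) $$ (r, c)"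
    using rc' l unfolding block_of_def max_ent_def mat_unit_def by auto
qed (auto simp: block_of_def mat_unit_def)

lemma lin_carrier: "linear_map_on din dout L \<Longrightarrow> X \<in> carrier_mat din din \<Longrightarrow> L X \<in> carrier_mat dout dout"
  unfolding linear_map_on_def by blast
lemma lin_add: "linear_map_on din dout L \<Longrightarrow> X \<in> carrier_mat din din \<Longrightarrow> Y \<in> carrier_mat din din \<Longrightarrow> L (X + Y) = L X + L Y"
  unfolding linear_map_on_def by blast
lemma lin_smult: "linear_map_on din dout L \<Longrightarrow> X \<in> carrier_mat din din \<Longrightarrow> L (c \<cdot>\<^sub>m X) = c \<cdot>\<^sub>m L X"
  unfolding linear_map_on_def by blast

lemma lin_zero:
  assumes L: "linear_map_on din dout L"
  shows "L (0\<^sub>m din din) = 0\<^sub>m dout dout"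
proof -
  have "0\<^sub>m din din = (0::complex) \<cdot>\<^sub>m 0\<^sub>m din din" by (intro eq_matI) auto
  then have "L (0\<^sub>m din din) = 0 \<cdot>\<^sub>m L (0\<^sub>m din din)" using lin_smult[OF L, of "0\<^sub>m din din" 0] by simp
  also have "\<dots> = 0\<^sub>m dout dout" using lin_carrier[OF L, of "0\<^sub>m din din"] by (intro eq_matI) auto
  finally show ?thesis .
qed

lemma lin_expand_set:
  assumes L: "linear_map_on din dout L" and X: "X \<in> carrier_mat din din" and S: "finite S"
    and pq: "p < dout" "q < dout"
  shows "S \<subseteq> {..<din} \<times> {..<din} \<longrightarrow>
    L (mat din din (\<lambda>(i,j). if (i,j) \<in> S then X $$ (i,j) else 0)) $$ (p,q)
     = (\<Sum>(i,j)\<in>S. X $$ (i,j) * L (mat_unit din i j) $$ (p,q))"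
  using S
proof (induction S rule: finite_induct)
  case empty
  have "mat din din (\<lambda>(i,j). if (i,j) \<in> {} then X $$ (i,j) else 0) = 0\<^sub>m din din"
    by (intro eq_matI) auto
  then have z0: "L (mat din din (\<lambda>(i,j). if (i,j) \<in> {} then X $$ (i,j) else 0)) = 0\<^sub>m dout dout"
    using lin_zero[OF L] by metis
  show ?case unfolding z0 using pq by simp
next
  case (insert s S)
  obtain i0 j0 where s: "s = (i0, j0)" by (cases s)
  show ?case
  proof
    assume sub: "insert s S \<subseteq> {..<din} \<times> {..<din}"
    then have i0: "i0 < din" "j0 < din" using s by auto
    define MS where "MS = mat din din (\<lambda>(i,j). if (i,j) \<in> S then X $$ (i,j) else 0)"
    have e: "mat din din (\<lambda>(i,j). if (i,j) \<in> insert s S then X $$ (i,j) else 0)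
        = MS + X $$ (i0,j0) \<cdot>\<^sub>m mat_unit din i0 j0"
      using insert.hyps(2) s unfolding MS_def mat_unit_def by (intro eq_matI) auto
    have cMS: "MS \<in> carrier_mat din din" unfolding MS_def by simp
    have "L (MS + X $$ (i0,j0) \<cdot>\<^sub>m mat_unit din i0 j0) = L MS + X $$ (i0,j0) \<cdot>\<^sub>m L (mat_unit din i0 j0)"
      using lin_add[OF L cMS, of "X $$ (i0,j0) \<cdot>\<^sub>m mat_unit din i0 j0"] lin_smult[OF L mat_unit_carrier]
      by simp
    moreover have "L MS \<in> carrier_mat dout dout" "L (mat_unit din i0 j0) \<in> carrier_mat dout dout"
      using lin_carrier[OF L] cMS by auto
    ultimately have "L (mat din din (\<lambda>(i,j). if (i,j) \<in> insert s S then X $$ (i,j) else 0)) $$ (p,q)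
        = L MS $$ (p,q) + X $$ (i0,j0) * L (mat_unit din i0 j0) $$ (p,q)"
      unfolding e using pq by simp
    also have "L MS $$ (p,q) = (\<Sum>(i,j)\<in>S. X $$ (i,j) * L (mat_unit din i j) $$ (p,q))"
      unfolding MS_def by (rule mp[OF insert.IH]) (use sub in blast)
    finally show "L (mat din din (\<lambda>(i,j). if (i,j) \<in> insert s S then X $$ (i,j) else 0)) $$ (p,q)
     = (\<Sum>(i,j)\<in>insert s S. X $$ (i,j) * L (mat_unit din i j) $$ (p,q))"
      using insert.hyps s by (simp add: add.commute)
  qed
qed

lemma lin_expand:
  assumes L: "linear_map_on din dout L" and X: "X \<in> carrier_mat din din"
    and pq: "p < dout" "q < dout"
  shows "L X $$ (p,q) = (\<Sum>i<din. \<Sum>j<din. X $$ (i,j) * L (mat_unit din i j) $$ (p,q))"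
proof -
  have e: "mat din din (\<lambda>(i,j). if (i,j) \<in> {..<din} \<times> {..<din} then X $$ (i,j) else 0) = X"
    using X by (intro eq_matI) auto
  have "L X $$ (p,q) = (\<Sum>(i,j)\<in>{..<din} \<times> {..<din}. X $$ (i,j) * L (mat_unit din i j) $$ (p,q))"
    using lin_expand_set[OF L X _ pq, of "{..<din} \<times> {..<din}"] unfolding e by simp
  also have "\<dots> = (\<Sum>i<din. \<Sum>j<din. X $$ (i,j) * L (mat_unit din i j) $$ (p,q))"
    by (simp add: sum.cartesian_product)
  finally show ?thesis .
qed

lemma id_tensor_expand:
  assumes L: "linear_map_on din dout L" and rc: "r < k*dout" "c < k*dout"
  shows "id_tensor_map k din dout L \<rho> $$ (r,c)
     = (\<Sum>i<din. \<Sum>j<din. \<rho> $$ ((r div dout)*din+i, (c div dout)*din+j)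
          * L (mat_unit din i j) $$ (r mod dout, c mod dout))"
proof -
  have dpos: "0 < dout" using rc by (cases "dout = 0") auto
  have "id_tensor_map k din dout L \<rho> $$ (r,c) = L (block_of din \<rho> (r div dout) (c div dout)) $$ (r mod dout, c mod dout)"
    unfolding id_tensor_map_def using rc by simp
  also have "\<dots> = (\<Sum>i<din. \<Sum>j<din. block_of din \<rho> (r div dout) (c div dout) $$ (i,j)
          * L (mat_unit din i j) $$ (r mod dout, c mod dout))"
    by (rule lin_expand[OF L block_carrier]) (use dpos in auto)
  also have "\<dots> = (\<Sum>i<din. \<Sum>j<din. \<rho> $$ ((r div dout)*din+i, (c div dout)*din+j)
          * L (mat_unit din i j) $$ (r mod dout, c mod dout))"
    by (intro sum.cong refl) (simp add: block_index)
  finally show ?thesis .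
qed

lemma choi_entry:
  assumes L: "linear_map_on din dout L" and "i < din" "j < din" "p < dout" "q < dout"
  shows "choi din dout L $$ (i*dout+p, j*dout+q) = L (mat_unit din i j) $$ (p,q) / of_nat din"
proof -
  have l: "i*dout+p < din*dout" "j*dout+q < din*dout" using assms by (auto intro: idx_lt)
  have "choi din dout L $$ (i*dout+p, j*dout+q) = L (block_of din (max_ent din) i j) $$ (p,q)"
    unfolding choi_def id_tensor_map_def using l assms by simp
  also have "\<dots> = ((1 / of_nat din) \<cdot>\<^sub>m L (mat_unit din i j)) $$ (p,q)"
    unfolding block_max_ent[OF assms(2,3)] using lin_smult[OF L mat_unit_carrier] by simp
  also have "\<dots> = L (mat_unit din i j) $$ (p,q) / of_nat din"
  proof -
    have "L (mat_unit din i j) \<in> carrier_mat dout dout" by (rule lin_carrier[OF L mat_unit_carrier])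
    then have "dim_row (L (mat_unit din i j)) = dout" "dim_col (L (mat_unit din i j)) = dout" by auto
    then show ?thesis using assms by simp
  qed
  finally show ?thesis .
qed

lemma psdf_scale: "0 \<le> c \<Longrightarrow> psdf n A \<Longrightarrow> psdf n (\<lambda>i j. c * A i j)"
proof -
  assume c: "0 \<le> c" and A: "psdf n A"
  have "qf n (\<lambda>i j. c * A i j) v = c * qf n A v" for v
    unfolding qf_def by (simp add: sum_distrib_left mult_ac)
  then show ?thesis using A c unfolding psdf_def by simp
qed

lemma choi_thm:
  assumes L: "linear_map_on din dout L" and C: "psd (din*dout) (choi din dout L)"
    and R: "psd (k*din) \<rho>"
  shows "psd (k*dout) (id_tensor_map k din dout L \<rho>)"
proof -
  define J where "J x y = of_nat din * choi din dout L $$ (x,y)" for x y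
  have J: "psdf (din*dout) J" unfolding J_def
    by (rule psdf_scale) (use C in \<open>auto simp: psd_iff less_eq_complex_def\<close>)
  have Rf: "psdf (k*din) (\<lambda>x y. \<rho> $$ (x,y))" using R by (simp add: psd_iff)
  have core: "psdf (k*dout) (\<lambda>r c. \<Sum>i<din. \<Sum>j<din. \<rho> $$ ((r div dout)*din+i, (c div dout)*din+j)
            * J (i*dout + r mod dout) (j*dout + c mod dout))"
    by (rule choi_core[OF Rf J])
  have "psdf (k*dout) (\<lambda>r c. id_tensor_map k din dout L \<rho> $$ (r,c))"
  proof (subst psdf_cong)
    fix r c assume rc: "r < k*dout" "c < k*dout"
    have dpos: "0 < dout" using rc by (cases "dout = 0") auto
    show "id_tensor_map k din dout L \<rho> $$ (r,c) = (\<Sum>i<din. \<Sum>j<din. \<rho> $$ ((r div dout)*din+i, (c div dout)*din+j)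
            * J (i*dout + r mod dout) (j*dout + c mod dout))"
      unfolding id_tensor_expand[OF L rc]
    proof (intro sum.cong refl)
      fix i j assume ij: "i \<in> {..<din}" "j \<in> {..<din}"
      then have "J (i*dout + r mod dout) (j*dout + c mod dout) = L (mat_unit din i j) $$ (r mod dout, c mod dout)"
        unfolding J_def using choi_entry[OF L, of i j "r mod dout" "c mod dout"] dpos by auto
      then show "\<rho> $$ ((r div dout)*din+i, (c div dout)*din+j) * L (mat_unit din i j) $$ (r mod dout, c mod dout)
         = \<rho> $$ ((r div dout)*din+i, (c div dout)*din+j) * J (i*dout + r mod dout) (j*dout + c mod dout)" by simp
    qed
  qed (rule core)
  then show ?thesis unfolding psd_iff id_tensor_map_def by simp
qed

lemma max_ent_psd:
  assumes d: "0 < d"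
  shows "psd (d*d) (max_ent d)"
proof -
  have "0 \<le> qf (d*d) (\<lambda>i j. max_ent d $$ (i,j)) v" for v
  proof -
    define S where "S = (\<Sum>a<d. v (a*d+a))"
    have "qf (d*d) (\<lambda>i j. max_ent d $$ (i,j)) v
       = (\<Sum>a<d. \<Sum>p<d. \<Sum>b<d. \<Sum>q<d. cnj (v (a*d+p)) * (if a = p \<and> b = q then 1 / of_nat d else 0) * v (b*d+q))"
      unfolding qf_split
      by (intro sum.cong refl) (simp add: max_ent_def idx_lt)
    also have "\<dots> = (\<Sum>a<d. \<Sum>p<d. if a = p then (\<Sum>b<d. cnj (v (a*d+a)) * v (b*d+b) / of_nat d) else 0)"
    proof (intro sum.cong refl)
      fix a p assume "a \<in> {..<d}" "p \<in> {..<d}"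
      show "(\<Sum>b<d. \<Sum>q<d. cnj (v (a*d+p)) * (if a = p \<and> b = q then 1 / of_nat d else 0) * v (b*d+q))
          = (if a = p then (\<Sum>b<d. cnj (v (a*d+a)) * v (b*d+b) / of_nat d) else 0)"
      proof (cases "a = p")
        case True
        have "(\<Sum>q<d. cnj (v (a*d+p)) * (if a = p \<and> b = q then 1 / of_nat d else 0) * v (b*d+q))
           = cnj (v (a*d+a)) * v (b*d+b) / of_nat d" if "b < d" for b
        proof -
          have "(\<Sum>q<d. cnj (v (a*d+p)) * (if a = p \<and> b = q then 1 / of_nat d else 0) * v (b*d+q))
             = (\<Sum>q<d. if b = q then cnj (v (a*d+a)) * v (b*d+b) / of_nat d else 0)"
            using True by (intro sum.cong refl) auto
          also have "\<dots> = cnj (v (a*d+a)) * v (b*d+b) / of_nat d" using that by (simp add: sum.delta)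
          finally show ?thesis .
        qed
        then have "(\<Sum>b<d. \<Sum>q<d. cnj (v (a*d+p)) * (if a = p \<and> b = q then 1 / of_nat d else 0) * v (b*d+q))
          = (\<Sum>b<d. cnj (v (a*d+a)) * v (b*d+b) / of_nat d)" by (intro sum.cong refl) auto
        then show ?thesis using True by simp
      next
        case False
        then show ?thesis by simp
      qed
    qed
    also have "\<dots> = (\<Sum>a<d. \<Sum>b<d. cnj (v (a*d+a)) * v (b*d+b) / of_nat d)"
      by (simp add: sum.delta)
    also have "\<dots> = cnj S * S / of_nat d"
      unfolding S_def by (simp only: cnj_sum sum_product sum_divide_distrib)
    also have "\<dots> = complex_of_real ((cmod S)^2 / real d)"
    proof -
      have "cnj S * S = complex_of_real ((cmod S)^2)" by (metis complex_norm_square mult.commute)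
      then show ?thesis by simp
    qed
    also have "0 \<le> \<dots>" by (simp add: less_eq_complex_def)
    finally show ?thesis .
  qed
  then show ?thesis unfolding psd_iff psdf_def by simp
qed

lemma max_ent_density:
  assumes d: "0 < d"
  shows "max_ent d \<in> density_ops (d*d)"
proof -
  have "mtrace (max_ent d) = (\<Sum>i<d*d. max_ent d $$ (i,i))" unfolding mtrace_def max_ent_def by simp
  also have "\<dots> = (\<Sum>a<d. \<Sum>p<d. max_ent d $$ (a*d+p, a*d+p))" by (rule sum_split_mult)
  also have "\<dots> = (\<Sum>a<d. \<Sum>p<d. if a = p then 1 / of_nat d else 0)"
    by (intro sum.cong refl) (simp add: max_ent_def idx_lt)
  also have "\<dots> = 1" using d by simp
  finally show ?thesis unfolding density_ops_def using max_ent_psd[OF d] by simp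
qed

lemma choi_psd_cp:
  assumes "completely_positive din dout N" "0 < din"
  shows "psd (din*dout) (choi din dout N)"
  using assms max_ent_psd[OF assms(2)] unfolding completely_positive_def choi_def by blast

lemma elog2_mono: "0 \<le> x \<Longrightarrow> x \<le> y \<Longrightarrow> elog2 x \<le> elog2 y"
  unfolding elog2_def by auto

lemma Dmax_set_nonneg: "Inf {t. 0 \<le> (t::real) \<and> P t} \<ge> 0" if "{t. 0 \<le> (t::real) \<and> P t} \<noteq> {}"
  using that by (intro cInf_greatest) auto

lemma Dmax_mono_sets:
  assumes "{t. 0 \<le> (t::real) \<and> P2 t} \<noteq> {} \<Longrightarrow> {t. 0 \<le> t \<and> P2 t} \<subseteq> {t. 0 \<le> t \<and> P1 t}"
  shows "(let L = {t. 0 \<le> (t::real) \<and> P1 t} in if L = {} then \<infinity> else elog2 (Inf L))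
      \<le> (let L = {t. 0 \<le> (t::real) \<and> P2 t} in if L = {} then \<infinity> else elog2 (Inf L))"
proof (cases "{t. 0 \<le> (t::real) \<and> P2 t} = {}")
  case True
  then show ?thesis by (simp add: Let_def)
next
  case False
  have sub: "{t. 0 \<le> t \<and> P2 t} \<subseteq> {t. 0 \<le> t \<and> P1 t}" using assms False by blast
  then have ne: "{t. 0 \<le> (t::real) \<and> P1 t} \<noteq> {}" using False by blast
  have "Inf {t. 0 \<le> (t::real) \<and> P1 t} \<le> Inf {t. 0 \<le> t \<and> P2 t}"
    by (rule cInf_superset_mono[OF False _ sub]) (auto intro!: bdd_belowI[of _ 0])
  then have "elog2 (Inf {t. 0 \<le> (t::real) \<and> P1 t}) \<le> elog2 (Inf {t. 0 \<le> t \<and> P2 t})"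
    using Dmax_set_nonneg[OF ne] by (rule elog2_mono[rotated])
  then show ?thesis unfolding Let_def if_not_P[OF ne] if_not_P[OF False] .
qed

lemma lin_comb:
  fixes N M :: "complex mat \<Rightarrow> complex mat"
  assumes N: "linear_map_on din dout N" and M: "linear_map_on din dout M"
  shows "linear_map_on din dout (\<lambda>X. complex_of_real t \<cdot>\<^sub>m M X - N X)"
proof -
  have cM: "M X \<in> carrier_mat dout dout" "N X \<in> carrier_mat dout dout" if "X \<in> carrier_mat din din" for X
    using lin_carrier[OF M that] lin_carrier[OF N that] by auto
  show ?thesis unfolding linear_map_on_def
  proof (intro conjI ballI allI)
    fix X :: "complex mat" assume X: "X \<in> carrier_mat din din"
    show "complex_of_real t \<cdot>\<^sub>m M X - N X \<in> carrier_mat dout dout" using cM[OF X] by (auto intro: minus_carrier_mat)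
  next
    fix X Y :: "complex mat" assume X: "X \<in> carrier_mat din din" and Y: "Y \<in> carrier_mat din din"
    show "complex_of_real t \<cdot>\<^sub>m M (X + Y) - N (X + Y) = complex_of_real t \<cdot>\<^sub>m M X - N X + (complex_of_real t \<cdot>\<^sub>m M Y - N Y)"
      unfolding lin_add[OF M X Y] lin_add[OF N X Y] using cM[OF X] cM[OF Y]
      by (intro eq_matI) (auto simp: algebra_simps)
  next
    fix c :: complex and X :: "complex mat" assume X: "X \<in> carrier_mat din din"
    show "complex_of_real t \<cdot>\<^sub>m M (c \<cdot>\<^sub>m X) - N (c \<cdot>\<^sub>m X) = c \<cdot>\<^sub>m (complex_of_real t \<cdot>\<^sub>m M X - N X)"
      unfolding lin_smult[OF M X] lin_smult[OF N X] using cM[OF X]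
      by (intro eq_matI) (auto simp: algebra_simps)
  qed
qed

lemma id_tensor_comb:
  fixes N M :: "complex mat \<Rightarrow> complex mat"
  assumes N: "linear_map_on din dout N" and M: "linear_map_on din dout M"
  shows "id_tensor_map k din dout (\<lambda>X. complex_of_real t \<cdot>\<^sub>m M X - N X) \<rho>
     = complex_of_real t \<cdot>\<^sub>m id_tensor_map k din dout M \<rho> - id_tensor_map k din dout N \<rho>"
proof -
  have cM: "M (block_of din \<rho> a b) \<in> carrier_mat dout dout" "N (block_of din \<rho> a b) \<in> carrier_mat dout dout" for a b
    using lin_carrier[OF M block_carrier] lin_carrier[OF N block_carrier] by auto
  have dM: "dim_row (M (block_of din \<rho> a b)) = dout" "dim_col (M (block_of din \<rho> a b)) = dout"
     "dim_row (N (block_of din \<rho> a b)) = dout" "dim_col (N (block_of din \<rho> a b)) = dout" for a b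
    using cM[of a b] by auto
  have dpos: "0 < dout" if "r < k*dout" for r using that by (cases "dout = 0") auto
  show ?thesis
  proof (intro eq_matI)
    fix r c assume "r < dim_row (complex_of_real t \<cdot>\<^sub>m id_tensor_map k din dout M \<rho> - id_tensor_map k din dout N \<rho>)"
      "c < dim_col (complex_of_real t \<cdot>\<^sub>m id_tensor_map k din dout M \<rho> - id_tensor_map k din dout N \<rho>)"
    then have rc: "r < k*dout" "c < k*dout" unfolding id_tensor_map_def by auto
    have "r mod dout < dout" "c mod dout < dout" using dpos[OF rc(1)] by auto
    then show "id_tensor_map k din dout (\<lambda>X. complex_of_real t \<cdot>\<^sub>m M X - N X) \<rho> $$ (r,c)
      = (complex_of_real t \<cdot>\<^sub>m id_tensor_map k din dout M \<rho> - id_tensor_map k din dout N \<rho>) $$ (r,c)"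
      unfolding id_tensor_map_def using rc by (simp add: dM)
  qed (simp_all add: id_tensor_map_def)
qed

lemma Dch_le:
  assumes N: "linear_map_on din dout N" and M: "linear_map_on din dout M"
  shows "Dmax_ch din dout N M \<le> Dmax (din*dout) (choi din dout N) (choi din dout M)"
  unfolding Dmax_ch_def
proof (rule SUP_least)
  fix p assume "p \<in> {(k, \<rho>). 0 < k \<and> \<rho> \<in> density_ops (k * din)}"
  then obtain k \<rho> where p: "p = (k, \<rho>)" and k: "0 < k" and \<rho>: "\<rho> \<in> density_ops (k*din)" by auto
  have \<rho>psd: "psd (k*din) \<rho>" using \<rho> unfolding density_ops_def by auto
  show "Dmax (fst p * dout) (id_tensor_map (fst p) din dout N (snd p)) (id_tensor_map (fst p) din dout M (snd p))
      \<le> Dmax (din * dout) (choi din dout N) (choi din dout M)"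
    unfolding p fst_conv snd_conv Dmax_def
  proof (rule Dmax_mono_sets)
    fix t
    assume "{t. 0 \<le> t \<and> loewner_le (din * dout) (choi din dout N) (complex_of_real t \<cdot>\<^sub>m choi din dout M)} \<noteq> {}"
    show "{t. 0 \<le> t \<and> loewner_le (din * dout) (choi din dout N) (complex_of_real t \<cdot>\<^sub>m choi din dout M)}
        \<subseteq> {t. 0 \<le> t \<and> loewner_le (k * dout) (id_tensor_map k din dout N \<rho>) (complex_of_real t \<cdot>\<^sub>m id_tensor_map k din dout M \<rho>)}"
    proof (intro subsetI CollectI conjI)
      fix s assume s: "s \<in> {t. 0 \<le> t \<and> loewner_le (din * dout) (choi din dout N) (complex_of_real t \<cdot>\<^sub>m choi din dout M)}"
      then show "0 \<le> s" by simp
      have lc: "linear_map_on din dout (\<lambda>X. complex_of_real s \<cdot>\<^sub>m M X - N X)" by (rule lin_comb[OF N M])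
      have "psd (din*dout) (complex_of_real s \<cdot>\<^sub>m choi din dout M - choi din dout N)"
        using s unfolding loewner_le_def by simp
      then have "psd (din*dout) (choi din dout (\<lambda>X. complex_of_real s \<cdot>\<^sub>m M X - N X))"
        unfolding choi_def id_tensor_comb[OF N M] .
      from choi_thm[OF lc this \<rho>psd]
      have "psd (k*dout) (complex_of_real s \<cdot>\<^sub>m id_tensor_map k din dout M \<rho> - id_tensor_map k din dout N \<rho>)"
        unfolding id_tensor_comb[OF N M] .
      then show "loewner_le (k * dout) (id_tensor_map k din dout N \<rho>) (complex_of_real s \<cdot>\<^sub>m id_tensor_map k din dout M \<rho>)"
        unfolding loewner_le_def by (simp add: id_tensor_map_def)
    qed
  qed
qed

lemma Dch_ge:
  assumes "0 < din"
  shows "Dmax (din*dout) (choi din dout N) (choi din dout M) \<le> Dmax_ch din dout N M"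
  unfolding Dmax_ch_def choi_def
  by (rule SUP_upper2[where i = "(din, max_ent din)"]) (use max_ent_density[OF assms] assms in auto)

lemma smult_smult_mat': "a \<cdot>\<^sub>m (b \<cdot>\<^sub>m B) = (a * b :: complex) \<cdot>\<^sub>m B"
  by (intro eq_matI) auto

lemma Dmax_scale:
  assumes c: "0 < c"
  shows "Dmax n A (complex_of_real c \<cdot>\<^sub>m B) = Dmax n A B - ereal (log 2 c)"
proof -
  define P where "P t = loewner_le n A (complex_of_real t \<cdot>\<^sub>m B)" for t
  have Pc: "loewner_le n A (complex_of_real t \<cdot>\<^sub>m (complex_of_real c \<cdot>\<^sub>m B)) = P (t*c)" for t
    unfolding P_def smult_smult_mat' by (simp add: mult.commute)
  define L1 where "L1 = {t. 0 \<le> t \<and> P t}"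
  define Lc where "Lc = {t. 0 \<le> t \<and> P (t*c)}"
  have D1: "Dmax n A B = (if L1 = {} then \<infinity> else elog2 (Inf L1))"
    unfolding Dmax_def L1_def P_def Let_def ..
  have Dc: "Dmax n A (complex_of_real c \<cdot>\<^sub>m B) = (if Lc = {} then \<infinity> else elog2 (Inf Lc))"
    unfolding Dmax_def Lc_def Pc Let_def ..
  have mem: "t \<in> Lc \<longleftrightarrow> t * c \<in> L1" for t
    unfolding Lc_def L1_def using c by (auto simp: zero_le_mult_iff)
  show ?thesis
  proof (cases "L1 = {}")
    case True
    then have "Lc = {}" using mem by blast
    then show ?thesis unfolding D1 Dc using True by simp
  next
    case False
    then obtain u where u: "u \<in> L1" by blast
    have "u / c \<in> Lc" using mem[of "u/c"] u c by simp
    then have ne: "Lc \<noteq> {}" by blast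
    have bdd1: "bdd_below L1" unfolding L1_def by (auto intro!: bdd_belowI[of _ 0])
    have bddc: "bdd_below Lc" unfolding Lc_def by (auto intro!: bdd_belowI[of _ 0])
    have I1: "Inf L1 \<ge> 0" using False unfolding L1_def by (intro cInf_greatest) auto
    have "Inf Lc = Inf L1 / c"
    proof (rule antisym)
      have "c * Inf Lc \<le> x" if "x \<in> L1" for x
      proof -
        have "x / c \<in> Lc" using mem[of "x/c"] that c by simp
        then have "Inf Lc \<le> x / c" by (rule cInf_lower[OF _ bddc])
        then show ?thesis using c by (simp add: field_simps)
      qed
      then have "c * Inf Lc \<le> Inf L1" by (intro cInf_greatest[OF False])
      then show "Inf Lc \<le> Inf L1 / c" using c by (simp add: field_simps)
    next
      have "Inf L1 / c \<le> t" if "t \<in> Lc" for t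
      proof -
        have "Inf L1 \<le> t * c" using mem[of t] that by (intro cInf_lower[OF _ bdd1]) auto
        then show ?thesis using c by (simp add: field_simps)
      qed
      then show "Inf L1 / c \<le> Inf Lc" by (intro cInf_greatest[OF ne])
    qed
    moreover have "elog2 (Inf L1 / c) = elog2 (Inf L1) - ereal (log 2 c)"
    proof (cases "Inf L1 = 0")
      case True
      then show ?thesis unfolding elog2_def by simp
    next
      case False
      then have "Inf L1 > 0" using I1 by simp
      then show ?thesis unfolding elog2_def using c False by (simp add: log_divide)
    qed
    ultimately show ?thesis unfolding D1 Dc using False ne by simp
  qed
qed

lemma decomp4:
  fixes r w x y z :: nat
  assumes "r < w*x*y*z"
  obtains i j k l where "i < w" "j < x" "k < y" "l < z" "r = ((i*x+j)*y+k)*z+l"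
proof -
  have pos: "0 < z" "0 < y" "0 < x" "0 < w" using assms by (auto intro!: Nat.gr0I)
  define l where "l = r mod z"
  define k where "k = (r div z) mod y"
  define j where "j = (r div (z*y)) mod x"
  define i where "i = r div (z*y*x)"
  have lt: "l < z" "k < y" "j < x" "i < w"
    unfolding l_def k_def j_def i_def using pos assms
    by (auto simp: less_mult_imp_div_less mult_ac div_less_iff_less_mult)
  have "r = ((i*x + j)*y + k)*z + l"
  proof -
    have "r = (r div z)*z + l" unfolding l_def by simp
    moreover have "r div z = (r div (z*y))*y + k" unfolding k_def by (simp add: div_mult2_eq)
    moreover have "r div (z*y) = i*x + j" unfolding i_def j_def by (simp add: div_mult2_eq)
    ultimately show ?thesis by simp
  qed
  then show ?thesis using that lt by blast
qed

lemma idx4_lt: "i < w \<Longrightarrow> j < x \<Longrightarrow> k < y \<Longrightarrow> l < (z::nat) \<Longrightarrow> ((i*x+j)*y+k)*z+l < w*x*y*z"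
  by (intro idx_lt) (auto intro!: idx_lt)

lemma cr_explicit:
  fixes i j k l w x y z :: nat
  assumes lt: "i < w" "j < x" "k < y" "l < z"
  shows "choi_reindex w y x z (((i*x+j)*y+k)*z+l) = ((i*y+k)*x+j)*z+l"
proof -
  define X where "X = ((i*x+j)*y+k)*z+l"
  have X1: "X mod z = l" "X div z = (i*x+j)*y+k" unfolding X_def using lt by auto
  have X2: "(X div z) mod y = k" "(X div z) div y = i*x+j" unfolding X1 using lt by auto
  have X3: "X div (z*y) = i*x+j" using X2 by (simp add: div_mult2_eq)
  have X4a: "X div (z*y) mod x = j" unfolding X3 using lt by simp
  have "X div (z*y*x) = X div (z*y) div x" by (simp add: div_mult2_eq)
  then have X4b: "X div (z*y*x) = i" unfolding X3 using lt by simp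
  show ?thesis unfolding X_def[symmetric] choi_reindex_def Let_def using X1 X2 X4a X4b
    by (simp add: mult_ac)
qed

lemma mtrace_unit: assumes "i < d" "j < d" shows "mtrace (mat_unit d i j) = (if i = j then 1 else 0)"
proof (cases "i = j")
  case True
  then show ?thesis unfolding mtrace_def mat_unit_def using assms by (simp add: sum.delta)
next
  case False
  then show ?thesis unfolding mtrace_def mat_unit_def by (simp, intro sum.neutral) auto
qed

definition MQ :: "nat \<Rightarrow> nat \<Rightarrow> nat \<Rightarrow> nat \<Rightarrow> (complex mat \<Rightarrow> complex mat) \<Rightarrow> complex mat \<Rightarrow> complex mat" where
  "MQ dA' dB' dA dB Q = tensor_map dA' dB' dA dB (repl_id dA) Q"

lemma MQ_entry:
  assumes Q: "linear_map_on dB' dB Q" and rc: "r < dA*dB" "c < dA*dB"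
  shows "MQ dA' dB' dA dB Q X $$ (r,c)
     = (if r div dB = c div dB then (\<Sum>i<dA'. Q (block_of dB' X i i) $$ (r mod dB, c mod dB)) else 0)"
proof -
  have cQ: "dim_row (Q (block_of dB' X i j)) = dB" "dim_col (Q (block_of dB' X i j)) = dB" for i j
    using lin_carrier[OF Q block_carrier] by auto
  have dpos: "0 < dB" using rc by (cases "dB = 0") auto
  have rd: "r div dB < dA" "c div dB < dA" using rc by (auto simp: div_less_iff_less_mult dpos mult.commute)
  have "MQ dA' dB' dA dB Q X $$ (r,c) = (\<Sum>i<dA'. \<Sum>j<dA'. tensor_mat (repl_id dA (mat_unit dA' i j)) (Q (block_of dB' X i j)) $$ (r,c))"
    unfolding MQ_def tensor_map_def using rc by simp
  also have "\<dots> = (\<Sum>i<dA'. \<Sum>j<dA'. (if i = j then 1 else 0) * (if r div dB = c div dB then 1 else 0)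
        * Q (block_of dB' X i j) $$ (r mod dB, c mod dB))"
    by (intro sum.cong refl) (simp add: tensor_mat_def repl_id_def mtrace_unit cQ rc rd)
  also have "\<dots> = (if r div dB = c div dB then (\<Sum>i<dA'. Q (block_of dB' X i i) $$ (r mod dB, c mod dB)) else 0)"
    by (simp add: sum.delta if_distrib[of "\<lambda>x. x * _"] cong: if_cong)
  finally show ?thesis .
qed

lemma idx_eq: "a < d \<Longrightarrow> b < (d::nat) \<Longrightarrow> (i*d+a = j*d+b) \<longleftrightarrow> (i = j \<and> a = b)"
  by (metis idx_div idx_mod)

lemma MQ_dims[simp]: "dim_row (MQ dA' dB' dA dB Q X) = dA*dB" "dim_col (MQ dA' dB' dA dB Q X) = dA*dB"
  unfolding MQ_def tensor_map_def by simp_all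

lemma MQ_linear:
  assumes Q: "linear_map_on dB' dB Q"
  shows "linear_map_on (dA'*dB') (dA*dB) (MQ dA' dB' dA dB Q)"
  unfolding linear_map_on_def
proof (intro conjI ballI allI)
  fix X :: "complex mat" assume "X \<in> carrier_mat (dA'*dB') (dA'*dB')"
  show "MQ dA' dB' dA dB Q X \<in> carrier_mat (dA*dB) (dA*dB)" unfolding MQ_def tensor_map_def by simp
next
  fix X Y :: "complex mat" assume X: "X \<in> carrier_mat (dA'*dB') (dA'*dB')" and Y: "Y \<in> carrier_mat (dA'*dB') (dA'*dB')"
  have bl: "block_of dB' (X + Y) i i = block_of dB' X i i + block_of dB' Y i i" if "i < dA'" for i
  proof (intro eq_matI)
    fix a b assume "a < dim_row (block_of dB' X i i + block_of dB' Y i i)" "b < dim_col (block_of dB' X i i + block_of dB' Y i i)"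
    then have ab: "a < dB'" "b < dB'" by (auto simp: block_of_def)
    have "i*dB'+a < dA'*dB'" "i*dB'+b < dA'*dB'" using ab that by (auto intro: idx_lt)
    then show "block_of dB' (X + Y) i i $$ (a,b) = (block_of dB' X i i + block_of dB' Y i i) $$ (a,b)"
      using X Y ab by (simp add: block_of_def)
  qed (auto simp: block_of_def)
  show "MQ dA' dB' dA dB Q (X + Y) = MQ dA' dB' dA dB Q X + MQ dA' dB' dA dB Q Y"
  proof (intro eq_matI)
    fix r c assume "r < dim_row (MQ dA' dB' dA dB Q X + MQ dA' dB' dA dB Q Y)" "c < dim_col (MQ dA' dB' dA dB Q X + MQ dA' dB' dA dB Q Y)"
    then have rc: "r < dA*dB" "c < dA*dB" by (auto simp: MQ_def tensor_map_def)
    have dpos: "0 < dB" using rc by (cases "dB = 0") auto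
    have cQ: "dim_row (Q (block_of dB' Z i i)) = dB" "dim_col (Q (block_of dB' Z i i)) = dB" for Z i
      using lin_carrier[OF Q block_carrier] by auto
    have "Q (block_of dB' (X + Y) i i) $$ (r mod dB, c mod dB)
       = Q (block_of dB' X i i) $$ (r mod dB, c mod dB) + Q (block_of dB' Y i i) $$ (r mod dB, c mod dB)"
      if "i < dA'" for i
      unfolding bl[OF that] lin_add[OF Q block_carrier block_carrier] using dpos cQ by simp
    then show "MQ dA' dB' dA dB Q (X + Y) $$ (r,c) = (MQ dA' dB' dA dB Q X + MQ dA' dB' dA dB Q Y) $$ (r,c)"
      using rc by (simp add: MQ_entry[OF Q] sum.distrib)
  qed (auto simp: MQ_def tensor_map_def)
next
  fix c :: complex and X :: "complex mat" assume X: "X \<in> carrier_mat (dA'*dB') (dA'*dB')"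
  have bl: "block_of dB' (c \<cdot>\<^sub>m X) i i = c \<cdot>\<^sub>m block_of dB' X i i" if "i < dA'" for i
  proof (intro eq_matI)
    fix a b assume "a < dim_row (c \<cdot>\<^sub>m block_of dB' X i i)" "b < dim_col (c \<cdot>\<^sub>m block_of dB' X i i)"
    then have ab: "a < dB'" "b < dB'" by (auto simp: block_of_def)
    have "i*dB'+a < dA'*dB'" "i*dB'+b < dA'*dB'" using ab that by (auto intro: idx_lt)
    then show "block_of dB' (c \<cdot>\<^sub>m X) i i $$ (a,b) = (c \<cdot>\<^sub>m block_of dB' X i i) $$ (a,b)"
      using X ab by (simp add: block_of_def)
  qed (auto simp: block_of_def)
  show "MQ dA' dB' dA dB Q (c \<cdot>\<^sub>m X) = c \<cdot>\<^sub>m MQ dA' dB' dA dB Q X"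
  proof (intro eq_matI)
    fix r s assume "r < dim_row (c \<cdot>\<^sub>m MQ dA' dB' dA dB Q X)" "s < dim_col (c \<cdot>\<^sub>m MQ dA' dB' dA dB Q X)"
    then have rc: "r < dA*dB" "s < dA*dB" by (auto simp: MQ_def tensor_map_def)
    have dpos: "0 < dB" using rc by (cases "dB = 0") auto
    have cQ: "dim_row (Q (block_of dB' Z i i)) = dB" "dim_col (Q (block_of dB' Z i i)) = dB" for Z i
      using lin_carrier[OF Q block_carrier] by auto
    have "Q (block_of dB' (c \<cdot>\<^sub>m X) i i) $$ (r mod dB, s mod dB) = c * Q (block_of dB' X i i) $$ (r mod dB, s mod dB)"
      if "i < dA'" for i
      unfolding bl[OF that] lin_smult[OF Q block_carrier] using dpos cQ by simp
    then show "MQ dA' dB' dA dB Q (c \<cdot>\<^sub>m X) $$ (r,s) = (c \<cdot>\<^sub>m MQ dA' dB' dA dB Q X) $$ (r,s)"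
      using rc by (simp add: MQ_entry[OF Q] sum_distrib_left)
  qed (auto simp: MQ_def tensor_map_def)
qed

lemma block_unit:
  assumes "xa < dA'" "xb < dB'" "ya < dA'" "yb < dB'" "i < dA'"
  shows "block_of dB' (mat_unit (dA'*dB') (xa*dB'+xb) (ya*dB'+yb)) i i
     = (if i = xa \<and> i = ya then mat_unit dB' xb yb else 0\<^sub>m dB' dB')"
proof (intro eq_matI)
  fix a b assume "a < dim_row (if i = xa \<and> i = ya then mat_unit dB' xb yb else 0\<^sub>m dB' dB')"
    "b < dim_col (if i = xa \<and> i = ya then mat_unit dB' xb yb else 0\<^sub>m dB' dB')"
  then have ab: "a < dB'" "b < dB'" by (auto simp: mat_unit_def split: if_splits)
  have l: "i*dB'+a < dA'*dB'" "i*dB'+b < dA'*dB'" using ab assms by (auto intro: idx_lt)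
  show "block_of dB' (mat_unit (dA'*dB') (xa*dB'+xb) (ya*dB'+yb)) i i $$ (a,b)
     = (if i = xa \<and> i = ya then mat_unit dB' xb yb else 0\<^sub>m dB' dB') $$ (a,b)"
    using l ab assms by (auto simp: block_of_def mat_unit_def idx_eq)
qed (auto simp: block_of_def mat_unit_def)

lemma MQ_unit:
  assumes Q: "linear_map_on dB' dB Q"
    and "xa < dA'" "xb < dB'" "ya < dA'" "yb < dB'" "s < dA*dB" "u < dA*dB"
  shows "MQ dA' dB' dA dB Q (mat_unit (dA'*dB') (xa*dB'+xb) (ya*dB'+yb)) $$ (s,u)
    = (if s div dB = u div dB \<and> xa = ya then Q (mat_unit dB' xb yb) $$ (s mod dB, u mod dB) else 0)"
proof -
  have dpos: "0 < dB" using assms by (cases "dB = 0") auto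
  have z: "Q (0\<^sub>m dB' dB') $$ (s mod dB, u mod dB) = 0" using lin_zero[OF Q] dpos by simp
  have "(\<Sum>i<dA'. Q (block_of dB' (mat_unit (dA'*dB') (xa*dB'+xb) (ya*dB'+yb)) i i) $$ (s mod dB, u mod dB))
      = (\<Sum>i<dA'. if i = xa then (if xa = ya then Q (mat_unit dB' xb yb) $$ (s mod dB, u mod dB) else 0) else 0)"
    by (intro sum.cong refl) (use assms z in \<open>auto simp: block_unit\<close>)
  also have "\<dots> = (if xa = ya then Q (mat_unit dB' xb yb) $$ (s mod dB, u mod dB) else 0)"
    using assms by (simp add: sum.delta')
  finally have calc: "(\<Sum>i<dA'. Q (block_of dB' (mat_unit (dA'*dB') (xa*dB'+xb) (ya*dB'+yb)) i i) $$ (s mod dB, u mod dB))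
      = (if xa = ya then Q (mat_unit dB' xb yb) $$ (s mod dB, u mod dB) else 0)" .
  show ?thesis unfolding MQ_entry[OF Q assms(6,7)] calc by auto
qed

lemma choi_dims[simp]: "dim_row (choi din dout L) = din*dout" "dim_col (choi din dout L) = din*dout"
  unfolding choi_def id_tensor_map_def by simp_all

lemma choi_state_dims[simp]: "dim_row (choi_state dA' dB' dA dB N) = dA'*dA*dB'*dB"
  "dim_col (choi_state dA' dB' dA dB N) = dA'*dA*dB'*dB"
  unfolding choi_state_def Let_def by simp_all

lemma choi_state_entry:
  assumes "ra < dA'" "a < dA" "rb < dB'" "b < dB" "ra2 < dA'" "a2 < dA" "rb2 < dB'" "b2 < dB"
  shows "choi_state dA' dB' dA dB N $$ (((ra*dA+a)*dB'+rb)*dB+b, ((ra2*dA+a2)*dB'+rb2)*dB+b2)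
     = choi (dA'*dB') (dA*dB) N $$ ((ra*dB'+rb)*(dA*dB) + (a*dB+b), (ra2*dB'+rb2)*(dA*dB) + (a2*dB+b2))"
proof -
  have l: "((ra*dA+a)*dB'+rb)*dB+b < dA'*dA*dB'*dB" "((ra2*dA+a2)*dB'+rb2)*dB+b2 < dA'*dA*dB'*dB"
    using assms by (auto intro: idx4_lt)
  have e1: "((ra*dB'+rb)*dA+a)*dB+b = (ra*dB'+rb)*(dA*dB) + (a*dB+b)"
    "((ra2*dB'+rb2)*dA+a2)*dB+b2 = (ra2*dB'+rb2)*(dA*dB) + (a2*dB+b2)" by (simp_all add: algebra_simps)
  show ?thesis unfolding choi_state_def Let_def choi_def[symmetric]
    using l cr_explicit[of ra dA' a dA rb dB' b dB] cr_explicit[of ra2 dA' a2 dA rb2 dB' b2 dB] assms e1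
    by simp
qed

lemma choi_state_MQ:
  assumes Q: "linear_map_on dB' dB Q" and pos: "0 < dA'" "0 < dB'" "0 < dA" "0 < dB"
  shows "choi_state dA' dB' dA dB (MQ dA' dB' dA dB Q)
     = complex_of_real (1 / real dA') \<cdot>\<^sub>m tensor_mat (1\<^sub>m (dA'*dA)) (choi dB' dB Q)"
proof (intro eq_matI)
  fix r c assume "r < dim_row (complex_of_real (1 / real dA') \<cdot>\<^sub>m tensor_mat (1\<^sub>m (dA'*dA)) (choi dB' dB Q))"
    "c < dim_col (complex_of_real (1 / real dA') \<cdot>\<^sub>m tensor_mat (1\<^sub>m (dA'*dA)) (choi dB' dB Q))"
  then have rc: "r < dA'*dA*dB'*dB" "c < dA'*dA*dB'*dB" by (auto simp: tensor_mat_def mult_ac)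
  obtain ra a rb b where r: "ra < dA'" "a < dA" "rb < dB'" "b < dB" "r = ((ra*dA+a)*dB'+rb)*dB+b"
    using decomp4[OF rc(1)] by blast
  obtain ra2 a2 rb2 b2 where c: "ra2 < dA'" "a2 < dA" "rb2 < dB'" "b2 < dB" "c = ((ra2*dA+a2)*dB'+rb2)*dB+b2"
    using decomp4[OF rc(2)] by blast
  have x: "ra*dB'+rb < dA'*dB'" "ra2*dB'+rb2 < dA'*dB'" "a*dB+b < dA*dB" "a2*dB+b2 < dA*dB"
    using r c by (auto intro: idx_lt)
  have "choi_state dA' dB' dA dB (MQ dA' dB' dA dB Q) $$ (r,c)
     = MQ dA' dB' dA dB Q (mat_unit (dA'*dB') (ra*dB'+rb) (ra2*dB'+rb2)) $$ (a*dB+b, a2*dB+b2) / of_nat (dA'*dB')"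
    unfolding r(5) c(5) choi_state_entry[OF r(1-4) c(1-4)]
    by (rule choi_entry[OF MQ_linear[OF Q] x])
  also have "\<dots> = (if a = a2 \<and> ra = ra2 then Q (mat_unit dB' rb rb2) $$ (b, b2) else 0) / of_nat (dA'*dB')"
    using MQ_unit[OF Q r(1,3) c(1,3) x(3,4)] r c by simp
  also have "\<dots> = (complex_of_real (1 / real dA') \<cdot>\<^sub>m tensor_mat (1\<^sub>m (dA'*dA)) (choi dB' dB Q)) $$ (r,c)"
  proof -
    have y: "rb*dB+b < dB'*dB" "rb2*dB+b2 < dB'*dB" "ra*dA+a < dA'*dA" "ra2*dA+a2 < dA'*dA"
      using r c by (auto intro: idx_lt)
    have e: "r = (ra*dA+a)*(dB'*dB) + (rb*dB+b)" "c = (ra2*dA+a2)*(dB'*dB) + (rb2*dB+b2)"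
      unfolding r(5) c(5) by (simp_all add: algebra_simps)
    have l: "r < dA'*dA*(dB'*dB)" "c < dA'*dA*(dB'*dB)" using rc by (simp_all add: mult_ac)
    have "(complex_of_real (1 / real dA') \<cdot>\<^sub>m tensor_mat (1\<^sub>m (dA'*dA)) (choi dB' dB Q)) $$ (r,c)
       = complex_of_real (1 / real dA') * ((if ra*dA+a = ra2*dA+a2 then 1 else 0) * choi dB' dB Q $$ (rb*dB+b, rb2*dB+b2))"
      using l y unfolding tensor_mat_def by (simp add: e[symmetric]) (simp add: e)
    also have "\<dots> = complex_of_real (1 / real dA') * ((if ra = ra2 \<and> a = a2 then 1 else 0) * (Q (mat_unit dB' rb rb2) $$ (b, b2) / of_nat dB'))"
      using choi_entry[OF Q r(3) c(3) r(4) c(4)] r c idx_eq[of a dA a2 ra ra2] by simp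
    also have "\<dots> = (if a = a2 \<and> ra = ra2 then Q (mat_unit dB' rb rb2) $$ (b, b2) else 0) / of_nat (dA'*dB')"
      by auto
    finally show ?thesis by simp
  qed
  finally show "choi_state dA' dB' dA dB (MQ dA' dB' dA dB Q) $$ (r,c)
     = (complex_of_real (1 / real dA') \<cdot>\<^sub>m tensor_mat (1\<^sub>m (dA'*dA)) (choi dB' dB Q)) $$ (r,c)" .
qed (auto simp: tensor_mat_def mult_ac)

lemma channel_linear: "Q \<in> channels din dout \<Longrightarrow> linear_map_on din dout Q"
  unfolding channels_def completely_positive_def by blast

lemma channel_cp: "Q \<in> channels din dout \<Longrightarrow> completely_positive din dout Q"
  unfolding channels_def by blast

lemma channel_tp: "Q \<in> channels din dout \<Longrightarrow> X \<in> carrier_mat din din \<Longrightarrow> mtrace (Q X) = mtrace X"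
  unfolding channels_def by blast

lemma mtrace_carrier: "X \<in> carrier_mat d d \<Longrightarrow> mtrace X = (\<Sum>i<d. X $$ (i,i))"
  unfolding mtrace_def by auto

lemma choi_density:
  assumes Q: "Q \<in> channels din dout" and d: "0 < din"
  shows "choi din dout Q \<in> density_ops (din*dout)"
proof -
  have L: "linear_map_on din dout Q" using channel_linear[OF Q] .
  have "mtrace (choi din dout Q) = (\<Sum>r<din*dout. choi din dout Q $$ (r,r))"
    by (simp add: mtrace_def)
  also have "\<dots> = (\<Sum>x<din. \<Sum>p<dout. choi din dout Q $$ (x*dout+p, x*dout+p))" by (rule sum_split_mult)
  also have "\<dots> = (\<Sum>x<din. (\<Sum>p<dout. Q (mat_unit din x x) $$ (p,p)) / of_nat din)"
    by (intro sum.cong refl) (simp add: choi_entry[OF L] sum_divide_distrib)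
  also have "\<dots> = (\<Sum>x<din. mtrace (Q (mat_unit din x x)) / of_nat din)"
    by (intro sum.cong refl) (simp add: mtrace_carrier[OF lin_carrier[OF L mat_unit_carrier]])
  also have "\<dots> = (\<Sum>x<din. 1 / of_nat din)"
    by (intro sum.cong refl) (simp add: channel_tp[OF Q mat_unit_carrier] mtrace_unit)
  also have "\<dots> = 1" using d by simp
  finally show ?thesis unfolding density_ops_def using choi_psd_cp[OF channel_cp[OF Q] d] by simp
qed

lemma choi_state_psd:
  assumes N: "N \<in> channels (dA'*dB') (dA*dB)" and d: "0 < dA'" "0 < dB'"
  shows "psd (dA'*dA*dB'*dB) (choi_state dA' dB' dA dB N)"
proof -
  have bij: "bij_betw (choi_reindex dA' dB' dA dB) {..<dA'*dA*dB'*dB} {..<dA'*dA*dB'*dB}"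
    using cr_bij[of dA' dB' dA dB] by (simp add: mult_ac)
  have C: "psd (dA'*dA*dB'*dB) (choi (dA'*dB') (dA*dB) N)"
    using choi_psd_cp[OF channel_cp[OF N]] d by (simp add: mult_ac)
  have Cc: "choi (dA'*dB') (dA*dB) N \<in> carrier_mat (dA'*dA*dB'*dB) (dA'*dA*dB'*dB)"
    using C unfolding psd_def by blast
  show ?thesis unfolding choi_state_def Let_def choi_def[symmetric]
    using psd_reindex_iff[OF bij Cc] C by simp
qed

lemma sum_if_const: "(\<Sum>x\<in>A. if P then f x else 0) = (if P then sum f A else 0)"
  by auto

lemma ptrace_psd:
  assumes R: "psd (dX*dY) \<rho>"
  shows "psd dY (ptrace1 dX dY \<rho>)"
proof -
  have Rf: "psdf (dX*dY) (\<lambda>i j. \<rho> $$ (i,j))" using R by (simp add: psd_iff)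
  have "0 \<le> qf dY (\<lambda>i j. ptrace1 dX dY \<rho> $$ (i,j)) v" for v
  proof -
    define w where "w a r = (if r div dY = a then v (r mod dY) else 0)" for a r
    have "qf dY (\<lambda>i j. ptrace1 dX dY \<rho> $$ (i,j)) v = (\<Sum>p<dY. \<Sum>q<dY. \<Sum>a<dX. cnj (v p) * \<rho> $$ (a*dY+p, a*dY+q) * v q)"
      unfolding qf_def ptrace1_def by (intro sum.cong refl) (simp add: sum_distrib_left sum_distrib_right)
    also have "\<dots> = (\<Sum>a<dX. \<Sum>p<dY. \<Sum>q<dY. cnj (v p) * \<rho> $$ (a*dY+p, a*dY+q) * v q)"
      by (rule sum_rot3)
    also have "\<dots> = (\<Sum>a<dX. qf (dX*dY) (\<lambda>i j. \<rho> $$ (i,j)) (w a))"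
    proof (intro sum.cong refl)
      fix a assume a: "a \<in> {..<dX}"
      have "qf (dX*dY) (\<lambda>i j. \<rho> $$ (i,j)) (w a)
         = (\<Sum>a'<dX. \<Sum>p<dY. \<Sum>b'<dX. \<Sum>q<dY. cnj (w a (a'*dY+p)) * \<rho> $$ (a'*dY+p, b'*dY+q) * w a (b'*dY+q))"
        by (rule qf_split)
      also have "\<dots> = (\<Sum>a'<dX. \<Sum>p<dY. \<Sum>b'<dX. \<Sum>q<dY.
           if a' = a then (if b' = a then cnj (v p) * \<rho> $$ (a'*dY+p, b'*dY+q) * v q else 0) else 0)"
        by (intro sum.cong refl) (simp add: w_def)
      also have "\<dots> = (\<Sum>p<dY. \<Sum>q<dY. cnj (v p) * \<rho> $$ (a*dY+p, a*dY+q) * v q)"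
        using a by (simp add: sum_if_const sum.delta)
      finally show "(\<Sum>p<dY. \<Sum>q<dY. cnj (v p) * \<rho> $$ (a*dY+p, a*dY+q) * v q) = qf (dX*dY) (\<lambda>i j. \<rho> $$ (i,j)) (w a)"
        by simp
    qed
    also have "0 \<le> \<dots>" using Rf unfolding psdf_def by (intro sum_nonneg) auto
    finally show ?thesis .
  qed
  then show ?thesis unfolding psd_iff psdf_def ptrace1_def by simp
qed

definition qmap :: "nat \<Rightarrow> nat \<Rightarrow> complex mat \<Rightarrow> complex mat \<Rightarrow> complex mat" where
  "qmap dB' dB \<sigma> X = mat dB dB (\<lambda>(p,q). of_nat dB' * (\<Sum>i<dB'. \<Sum>j<dB'. X $$ (i,j) * \<sigma> $$ (i*dB+p, j*dB+q)))"

lemma qmap_linear: "linear_map_on dB' dB (qmap dB' dB \<sigma>)"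
  unfolding linear_map_on_def
proof (intro conjI ballI allI)
  fix X :: "complex mat" assume "X \<in> carrier_mat dB' dB'"
  show "qmap dB' dB \<sigma> X \<in> carrier_mat dB dB" unfolding qmap_def by simp
next
  fix X Y :: "complex mat" assume X: "X \<in> carrier_mat dB' dB'" and Y: "Y \<in> carrier_mat dB' dB'"
  show "qmap dB' dB \<sigma> (X + Y) = qmap dB' dB \<sigma> X + qmap dB' dB \<sigma> Y"
  proof (intro eq_matI)
    fix p q assume "p < dim_row (qmap dB' dB \<sigma> X + qmap dB' dB \<sigma> Y)" "q < dim_col (qmap dB' dB \<sigma> X + qmap dB' dB \<sigma> Y)"
    then have pq: "p < dB" "q < dB" by (auto simp: qmap_def)
    have "(\<Sum>i<dB'. \<Sum>j<dB'. (X + Y) $$ (i,j) * \<sigma> $$ (i*dB+p, j*dB+q))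
       = (\<Sum>i<dB'. \<Sum>j<dB'. X $$ (i,j) * \<sigma> $$ (i*dB+p, j*dB+q)) + (\<Sum>i<dB'. \<Sum>j<dB'. Y $$ (i,j) * \<sigma> $$ (i*dB+p, j*dB+q))"
      using X Y by (simp add: sum.distrib[symmetric] algebra_simps)
    then show "qmap dB' dB \<sigma> (X + Y) $$ (p,q) = (qmap dB' dB \<sigma> X + qmap dB' dB \<sigma> Y) $$ (p,q)"
      unfolding qmap_def using pq by (simp add: algebra_simps)
  qed (auto simp: qmap_def)
next
  fix c :: complex and X :: "complex mat" assume X: "X \<in> carrier_mat dB' dB'"
  show "qmap dB' dB \<sigma> (c \<cdot>\<^sub>m X) = c \<cdot>\<^sub>m qmap dB' dB \<sigma> X"
  proof (intro eq_matI)
    fix p q assume "p < dim_row (c \<cdot>\<^sub>m qmap dB' dB \<sigma> X)" "q < dim_col (c \<cdot>\<^sub>m qmap dB' dB \<sigma> X)"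
    then have pq: "p < dB" "q < dB" by (auto simp: qmap_def)
    have "(\<Sum>i<dB'. \<Sum>j<dB'. (c \<cdot>\<^sub>m X) $$ (i,j) * \<sigma> $$ (i*dB+p, j*dB+q))
       = c * (\<Sum>i<dB'. \<Sum>j<dB'. X $$ (i,j) * \<sigma> $$ (i*dB+p, j*dB+q))"
      using X by (simp add: sum_distrib_left mult_ac)
    then show "qmap dB' dB \<sigma> (c \<cdot>\<^sub>m X) $$ (p,q) = (c \<cdot>\<^sub>m qmap dB' dB \<sigma> X) $$ (p,q)"
      unfolding qmap_def using pq by (simp add: mult_ac)
  qed (auto simp: qmap_def)
qed

lemma qmap_unit:
  assumes "x < dB'" "y < dB'" "p < dB" "q < dB"
  shows "qmap dB' dB \<sigma> (mat_unit dB' x y) $$ (p,q) = of_nat dB' * \<sigma> $$ (x*dB+p, y*dB+q)"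
proof -
  have "(\<Sum>i<dB'. \<Sum>j<dB'. mat_unit dB' x y $$ (i,j) * \<sigma> $$ (i*dB+p, j*dB+q))
      = (\<Sum>i<dB'. \<Sum>j<dB'. if i = x then (if j = y then \<sigma> $$ (i*dB+p, j*dB+q) else 0) else 0)"
    by (intro sum.cong refl) (auto simp: mat_unit_def)
  also have "\<dots> = \<sigma> $$ (x*dB+p, y*dB+q)" using assms by (simp add: sum_if_const sum.delta)
  finally show ?thesis unfolding qmap_def using assms by simp
qed

lemma choi_qmap:
  assumes \<sigma>: "\<sigma> \<in> carrier_mat (dB'*dB) (dB'*dB)" and d: "0 < dB'"
  shows "choi dB' dB (qmap dB' dB \<sigma>) = \<sigma>"
proof (intro eq_matI)
  fix r c assume "r < dim_row \<sigma>" "c < dim_col \<sigma>"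
  then have rc: "r < dB'*dB" "c < dB'*dB" using \<sigma> by auto
  have dpos: "0 < dB" using rc by (cases "dB = 0") auto
  have e: "r = (r div dB)*dB + r mod dB" "c = (c div dB)*dB + c mod dB" by simp_all
  have l: "r div dB < dB'" "c div dB < dB'" "r mod dB < dB" "c mod dB < dB"
    using rc dpos by (auto simp: div_less_iff_less_mult)
  have "choi dB' dB (qmap dB' dB \<sigma>) $$ ((r div dB)*dB + r mod dB, (c div dB)*dB + c mod dB)
      = \<sigma> $$ ((r div dB)*dB + r mod dB, (c div dB)*dB + c mod dB)"
    using choi_entry[OF qmap_linear l] qmap_unit[OF l] d by simp
  then show "choi dB' dB (qmap dB' dB \<sigma>) $$ (r,c) = \<sigma> $$ (r,c)" using e by metis
qed (use \<sigma> in auto)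

lemma qmap_channel:
  assumes \<sigma>: "psd (dB'*dB) \<sigma>" and d: "0 < dB'"
    and tr: "\<And>i j. i < dB' \<Longrightarrow> j < dB' \<Longrightarrow> (\<Sum>p<dB. \<sigma> $$ (i*dB+p, j*dB+p)) = (if i = j then 1 / of_nat dB' else 0)"
  shows "qmap dB' dB \<sigma> \<in> channels dB' dB"
proof -
  have \<sigma>c: "\<sigma> \<in> carrier_mat (dB'*dB) (dB'*dB)" using \<sigma> unfolding psd_def by blast
  have cp: "completely_positive dB' dB (qmap dB' dB \<sigma>)"
    unfolding completely_positive_def
  proof (intro conjI allI impI qmap_linear)
    fix k :: nat and X assume "0 < k" "psd (k*dB') X"
    then show "psd (k*dB) (id_tensor_map k dB' dB (qmap dB' dB \<sigma>) X)"
      using choi_thm[OF qmap_linear _ \<open>psd (k*dB') X\<close>] choi_qmap[OF \<sigma>c d] \<sigma> by simp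
  qed
  have tp: "mtrace (qmap dB' dB \<sigma> X) = mtrace X" if X: "X \<in> carrier_mat dB' dB'" for X
  proof -
    have "mtrace (qmap dB' dB \<sigma> X) = (\<Sum>p<dB. of_nat dB' * (\<Sum>i<dB'. \<Sum>j<dB'. X $$ (i,j) * \<sigma> $$ (i*dB+p, j*dB+p)))"
      unfolding mtrace_def qmap_def by simp
    also have "\<dots> = of_nat dB' * (\<Sum>i<dB'. \<Sum>j<dB'. X $$ (i,j) * (\<Sum>p<dB. \<sigma> $$ (i*dB+p, j*dB+p)))"
      by (simp add: sum_distrib_left sum_rot3[of _ "{..<dB}"] mult_ac)
    also have "\<dots> = of_nat dB' * (\<Sum>i<dB'. \<Sum>j<dB'. if i = j then X $$ (i,j) / of_nat dB' else 0)"
      by (intro arg_cong[where f = "\<lambda>x. _ * x"] sum.cong refl) (simp add: tr)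
    also have "\<dots> = (\<Sum>i<dB'. X $$ (i,i))" using d by (simp add: sum.delta' sum_distrib_left)
    also have "\<dots> = mtrace X" using mtrace_carrier[OF X] by simp
    finally show ?thesis .
  qed
  show ?thesis unfolding channels_def using cp tp by blast
qed

lemma sigma0_trace:
  assumes N: "N \<in> channels (dA'*dB') (dA*dB)" and pos: "0 < dA'" "0 < dB'" "0 < dA" "0 < dB"
    and ij: "i < dB'" "j < dB'"
  shows "(\<Sum>p<dB. ptrace1 (dA'*dA) (dB'*dB) (choi_state dA' dB' dA dB N) $$ (i*dB+p, j*dB+p))
     = (if i = j then 1 / of_nat dB' else 0)"
proof -
  have L: "linear_map_on (dA'*dB') (dA*dB) N" by (rule channel_linear[OF N])
  define F where "F ra a p = N (mat_unit (dA'*dB') (ra*dB'+i) (ra*dB'+j)) $$ (a*dB+p, a*dB+p) / of_nat (dA'*dB')" for ra a p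
  have "(\<Sum>p<dB. ptrace1 (dA'*dA) (dB'*dB) (choi_state dA' dB' dA dB N) $$ (i*dB+p, j*dB+p))
      = (\<Sum>p<dB. \<Sum>ra<dA'. \<Sum>a<dA. F ra a p)"
  proof (intro sum.cong refl)
    fix p assume p: "p \<in> {..<dB}"
    have l: "i*dB+p < dB'*dB" "j*dB+p < dB'*dB" using ij p by (auto intro: idx_lt)
    have "ptrace1 (dA'*dA) (dB'*dB) (choi_state dA' dB' dA dB N) $$ (i*dB+p, j*dB+p)
        = (\<Sum>x<dA'*dA. choi_state dA' dB' dA dB N $$ (x*(dB'*dB) + (i*dB+p), x*(dB'*dB) + (j*dB+p)))"
      unfolding ptrace1_def using l by simp
    also have "\<dots> = (\<Sum>ra<dA'. \<Sum>a<dA. choi_state dA' dB' dA dB N $$ ((ra*dA+a)*(dB'*dB) + (i*dB+p), (ra*dA+a)*(dB'*dB) + (j*dB+p)))"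
      by (rule sum_split_mult)
    also have "\<dots> = (\<Sum>ra<dA'. \<Sum>a<dA. F ra a p)"
    proof (intro sum.cong refl)
      fix ra a assume ra: "ra \<in> {..<dA'}" and a: "a \<in> {..<dA}"
      have e: "(ra*dA+a)*(dB'*dB) + (i*dB+p) = ((ra*dA+a)*dB'+i)*dB+p"
        "(ra*dA+a)*(dB'*dB) + (j*dB+p) = ((ra*dA+a)*dB'+j)*dB+p" by (simp_all add: algebra_simps)
      have x: "ra*dB'+i < dA'*dB'" "ra*dB'+j < dA'*dB'" "a*dB+p < dA*dB" using ra a ij p by (auto intro: idx_lt)
      show "choi_state dA' dB' dA dB N $$ ((ra*dA+a)*(dB'*dB) + (i*dB+p), (ra*dA+a)*(dB'*dB) + (j*dB+p)) = F ra a p"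
        unfolding e F_def using ra a ij p
        by (simp add: choi_state_entry choi_entry[OF L x(1,2) x(3,3)])
    qed
    finally show "ptrace1 (dA'*dA) (dB'*dB) (choi_state dA' dB' dA dB N) $$ (i*dB+p, j*dB+p) = (\<Sum>ra<dA'. \<Sum>a<dA. F ra a p)" .
  qed
  also have "\<dots> = (\<Sum>ra<dA'. \<Sum>p<dB. \<Sum>a<dA. F ra a p)" by (rule sum.swap)
  also have "\<dots> = (\<Sum>ra<dA'. \<Sum>a<dA. \<Sum>p<dB. F ra a p)" by (rule sum_swap_at1)
  also have "\<dots> = (\<Sum>ra<dA'. mtrace (N (mat_unit (dA'*dB') (ra*dB'+i) (ra*dB'+j))) / of_nat (dA'*dB'))"
  proof (intro sum.cong refl)
    fix ra assume ra: "ra \<in> {..<dA'}"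
    have c: "N (mat_unit (dA'*dB') (ra*dB'+i) (ra*dB'+j)) \<in> carrier_mat (dA*dB) (dA*dB)"
      by (rule lin_carrier[OF L mat_unit_carrier])
    show "(\<Sum>a<dA. \<Sum>p<dB. F ra a p) = mtrace (N (mat_unit (dA'*dB') (ra*dB'+i) (ra*dB'+j))) / of_nat (dA'*dB')"
      unfolding mtrace_carrier[OF c] sum_split_mult F_def by (simp add: sum_divide_distrib)
  qed
  also have "\<dots> = (\<Sum>ra<dA'. (if i = j then 1 else 0) / of_nat (dA'*dB'))"
  proof (intro sum.cong refl)
    fix ra assume ra: "ra \<in> {..<dA'}"
    have x: "ra*dB'+i < dA'*dB'" "ra*dB'+j < dA'*dB'" using ra ij by (auto intro: idx_lt)
    show "mtrace (N (mat_unit (dA'*dB') (ra*dB'+i) (ra*dB'+j))) / of_nat (dA'*dB') = (if i = j then 1 else 0) / of_nat (dA'*dB')"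
      using channel_tp[OF N mat_unit_carrier] mtrace_unit[OF x] by simp
  qed
  also have "\<dots> = (if i = j then 1 / of_nat dB' else 0)" using pos by simp
  finally show ?thesis .
qed

lemma ereal_neg_add: "-(a + ereal c) = -a - ereal (c::real)"
  by (cases a) auto

lemma ereal_sub_neg: "a - ereal (- c) = a + ereal (c::real)"
  by (cases a) auto

lemma key_eq:
  assumes Q: "linear_map_on dB' dB Q" and pos: "0 < dA'" "0 < dB'" "0 < dA" "0 < dB"
    and NL: "linear_map_on (dA'*dB') (dA*dB) N"
  shows "Dmax ((dA'*dB')*(dA*dB)) (choi (dA'*dB') (dA*dB) N) (choi (dA'*dB') (dA*dB) (MQ dA' dB' dA dB Q))
    = Dmax ((dA'*dA)*(dB'*dB)) (choi_state dA' dB' dA dB N) (tensor_mat (1\<^sub>m (dA'*dA)) (choi dB' dB Q))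
      + ereal (log 2 (real dA'))"
proof -
  have Deq1: "(dA'*dB')*(dA*dB) = dA'*dA*dB'*dB" and Deq2: "(dA'*dA)*(dB'*dB) = dA'*dA*dB'*dB"
    by (simp_all only: mult_ac)
  have bij: "bij_betw (choi_reindex dA' dB' dA dB) {..<dA'*dA*dB'*dB} {..<dA'*dA*dB'*dB}"
  proof -
    have e: "dA'*dB'*dA*dB = dA'*dA*dB'*dB" by (simp only: mult_ac)
    show ?thesis using cr_bij[of dA' dB' dA dB] unfolding e .
  qed
  have c1: "choi (dA'*dB') (dA*dB) N \<in> carrier_mat (dA'*dA*dB'*dB) (dA'*dA*dB'*dB)"
    unfolding Deq1[symmetric] by (rule carrier_matI) (rule choi_dims)+
  have c2: "choi (dA'*dB') (dA*dB) (MQ dA' dB' dA dB Q) \<in> carrier_mat (dA'*dA*dB'*dB) (dA'*dA*dB'*dB)"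
    unfolding Deq1[symmetric] by (rule carrier_matI) (rule choi_dims)+
  have "Dmax (dA'*dA*dB'*dB) (choi_state dA' dB' dA dB N) (choi_state dA' dB' dA dB (MQ dA' dB' dA dB Q))
      = Dmax (dA'*dA*dB'*dB) (choi (dA'*dB') (dA*dB) N) (choi (dA'*dB') (dA*dB) (MQ dA' dB' dA dB Q))"
    unfolding choi_state_def Let_def choi_def[symmetric] by (rule Dmax_reindex[OF bij c1 c2])
  moreover have "Dmax (dA'*dA*dB'*dB) (choi_state dA' dB' dA dB N) (choi_state dA' dB' dA dB (MQ dA' dB' dA dB Q))
      = Dmax (dA'*dA*dB'*dB) (choi_state dA' dB' dA dB N) (tensor_mat (1\<^sub>m (dA'*dA)) (choi dB' dB Q))
        + ereal (log 2 (real dA'))"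
  proof -
    have lg: "log 2 (1 / real dA') = - log 2 (real dA')" using pos by (simp add: log_divide)
    have "Dmax (dA'*dA*dB'*dB) (choi_state dA' dB' dA dB N) (complex_of_real (1 / real dA') \<cdot>\<^sub>m tensor_mat (1\<^sub>m (dA'*dA)) (choi dB' dB Q))
       = Dmax (dA'*dA*dB'*dB) (choi_state dA' dB' dA dB N) (tensor_mat (1\<^sub>m (dA'*dA)) (choi dB' dB Q)) - ereal (log 2 (1 / real dA'))"
      by (rule Dmax_scale) (use pos in simp)
    then show ?thesis
      unfolding choi_state_MQ[OF Q pos] lg ereal_sub_neg .
  qed
  ultimately show ?thesis unfolding Deq1 Deq2 by (rule trans[OF sym])
qed

theorem proposition5:
  fixes dA' dB' dA dB :: nat and N :: "complex mat \<Rightarrow> complex mat"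
  assumes "0 < dA'" "0 < dB'" "0 < dA" "0 < dB"
    and "N \<in> channels (dA' * dB') (dA * dB)"
  shows "cond_min_entropy_down (dA' * dA) (dB' * dB) (choi_state dA' dB' dA dB N)
           - ereal (log 2 (real dA'))
         \<le> chan_cond_min_entropy dA' dB' dA dB N \<and>
         chan_cond_min_entropy dA' dB' dA dB N
         \<le> cond_min_entropy (dA' * dA) (dB' * dB) (choi_state dA' dB' dA dB N)
           - ereal (log 2 (real dA'))"
proof -
  note pos = assms(1-4)
  have N: "N \<in> channels (dA' * dB') (dA * dB)" by (rule assms(5))
  have NL: "linear_map_on (dA'*dB') (dA*dB) N" by (rule channel_linear[OF N])
  define \<Phi> where "\<Phi> = choi_state dA' dB' dA dB N"
  define I where "I = (INF Q\<in>channels dB' dB. Dmax_ch (dA'*dB') (dA*dB) N (tensor_map dA' dB' dA dB (repl_id dA) Q))"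
  have chan: "chan_cond_min_entropy dA' dB' dA dB N = - I"
    unfolding chan_cond_min_entropy_def I_def ..
  have dI: "0 < dA'*dB'" using pos by simp
  have up: "(INF \<sigma>\<in>density_ops (dB'*dB). Dmax ((dA'*dA)*(dB'*dB)) \<Phi> (tensor_mat (1\<^sub>m (dA'*dA)) \<sigma>))
      + ereal (log 2 (real dA')) \<le> I"
    unfolding I_def
  proof (rule INF_greatest)
    fix Q assume Q: "Q \<in> channels dB' dB"
    have QL: "linear_map_on dB' dB Q" by (rule channel_linear[OF Q])
    have "(INF \<sigma>\<in>density_ops (dB'*dB). Dmax ((dA'*dA)*(dB'*dB)) \<Phi> (tensor_mat (1\<^sub>m (dA'*dA)) \<sigma>))
        \<le> Dmax ((dA'*dA)*(dB'*dB)) \<Phi> (tensor_mat (1\<^sub>m (dA'*dA)) (choi dB' dB Q))"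
      by (rule INF_lower) (rule choi_density[OF Q pos(2)])
    then have "(INF \<sigma>\<in>density_ops (dB'*dB). Dmax ((dA'*dA)*(dB'*dB)) \<Phi> (tensor_mat (1\<^sub>m (dA'*dA)) \<sigma>))
        + ereal (log 2 (real dA'))
        \<le> Dmax ((dA'*dA)*(dB'*dB)) \<Phi> (tensor_mat (1\<^sub>m (dA'*dA)) (choi dB' dB Q)) + ereal (log 2 (real dA'))"
      by (rule add_right_mono)
    also have "\<dots> = Dmax ((dA'*dB')*(dA*dB)) (choi (dA'*dB') (dA*dB) N) (choi (dA'*dB') (dA*dB) (MQ dA' dB' dA dB Q))"
      unfolding \<Phi>_def by (rule key_eq[OF QL pos NL, symmetric])
    also have "\<dots> \<le> Dmax_ch (dA'*dB') (dA*dB) N (MQ dA' dB' dA dB Q)" by (rule Dch_ge[OF dI])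
    finally show "(INF \<sigma>\<in>density_ops (dB'*dB). Dmax ((dA'*dA)*(dB'*dB)) \<Phi> (tensor_mat (1\<^sub>m (dA'*dA)) \<sigma>))
        + ereal (log 2 (real dA')) \<le> Dmax_ch (dA'*dB') (dA*dB) N (tensor_map dA' dB' dA dB (repl_id dA) Q)"
      unfolding MQ_def .
  qed
  have upper: "chan_cond_min_entropy dA' dB' dA dB N
         \<le> cond_min_entropy (dA' * dA) (dB' * dB) \<Phi> - ereal (log 2 (real dA'))"
    unfolding chan cond_min_entropy_def \<Phi>_def[symmetric] ereal_neg_add[symmetric] using up ereal_minus_le_minus by blast
  define \<sigma>0 where "\<sigma>0 = ptrace1 (dA'*dA) (dB'*dB) \<Phi>"
  define Q0 where "Q0 = qmap dB' dB \<sigma>0"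
  have \<Phi>psd: "psd ((dA'*dA)*(dB'*dB)) \<Phi>"
  proof -
    have e: "(dA'*dA)*(dB'*dB) = dA'*dA*dB'*dB" by (simp only: mult_ac)
    show ?thesis using choi_state_psd[OF N pos(1,2)] unfolding \<Phi>_def e .
  qed
  have \<sigma>0psd: "psd (dB'*dB) \<sigma>0" unfolding \<sigma>0_def by (rule ptrace_psd[OF \<Phi>psd])
  have \<sigma>0c: "\<sigma>0 \<in> carrier_mat (dB'*dB) (dB'*dB)" unfolding \<sigma>0_def ptrace1_def by simp
  have Q0: "Q0 \<in> channels dB' dB"
    unfolding Q0_def
    by (rule qmap_channel[OF \<sigma>0psd pos(2)]) (unfold \<sigma>0_def \<Phi>_def, rule sigma0_trace[OF N pos])
  have Q0L: "linear_map_on dB' dB Q0" unfolding Q0_def by (rule qmap_linear)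
  have cQ0: "choi dB' dB Q0 = \<sigma>0" unfolding Q0_def by (rule choi_qmap[OF \<sigma>0c pos(2)])
  have "I \<le> Dmax_ch (dA'*dB') (dA*dB) N (tensor_map dA' dB' dA dB (repl_id dA) Q0)"
    unfolding I_def by (rule INF_lower[OF Q0])
  also have "\<dots> \<le> Dmax ((dA'*dB')*(dA*dB)) (choi (dA'*dB') (dA*dB) N) (choi (dA'*dB') (dA*dB) (MQ dA' dB' dA dB Q0))"
    unfolding MQ_def[symmetric] by (rule Dch_le[OF NL MQ_linear[OF Q0L]])
  also have "\<dots> = Dmax ((dA'*dA)*(dB'*dB)) \<Phi> (tensor_mat (1\<^sub>m (dA'*dA)) \<sigma>0) + ereal (log 2 (real dA'))"
    unfolding \<Phi>_def cQ0[symmetric] by (rule key_eq[OF Q0L pos NL])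
  finally have low: "I \<le> Dmax ((dA'*dA)*(dB'*dB)) \<Phi> (tensor_mat (1\<^sub>m (dA'*dA)) \<sigma>0) + ereal (log 2 (real dA'))" .
  have lower: "cond_min_entropy_down (dA' * dA) (dB' * dB) \<Phi> - ereal (log 2 (real dA'))
         \<le> chan_cond_min_entropy dA' dB' dA dB N"
    unfolding chan cond_min_entropy_down_def \<Phi>_def[symmetric] ereal_neg_add[symmetric] \<sigma>0_def[symmetric]
    using low ereal_minus_le_minus by blast
  show ?thesis unfolding \<Phi>_def[symmetric] using lower upper by (rule conjI)
qed

end
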